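(* Let $H$ be a complex Hilbert space with inner product $\langle\cdot,\cdot\rangle$ and norm $|\cdot|$, and let $-A$ be the generator of a holomorphic semigroup $e^{-tA}$ in $H$. Assume $A$ is positively accretive, i.e. $\nu(A)\subset\{z\in\mathbb{C}:\operatorname{Re}z>0\}$, and hyponormal, i.e. $A$ is densely defined, $D(A)\subset D(A^* )$ and $|Ax|\ge|A^*x|$ for all $x\in D(A)$. Then: (a) for every $x\in D(A^2)$ with $|x|=1$, $2\big(\operatorname{Re}\langle Ax,x\rangle\big)^2\le \operatorname{Re}\langle A^2x,x\rangle+|Ax|^2$; (b) for every $u_0\neq0$ the height function $h(t)=|e^{-tA}u_0|$ is log-convex on $[0,\infty[$, i.e. $|e^{-sA}u_0|\le |e^{-rA}u_0|^{\frac{t-s}{t-r}}|e^{-tA}u_0|^{\frac{s-r}{t-r}}$ for all $0\le r<s<t$; (c) for every $u_0\neq0$, $h$ is strictly decreasing and strictly convex on $[0,\infty[$ and differentiable from the right at $t=0$ with $h'(0)\in[-\infty,0]$, and for $|u_0|=1$, $h'(0)=\inf_{t>0}h'(t)\le -m(A)$; if moreover $u_0\in D(A)$ with $|u_0|=1$, then $h'(0)=-\operatorname{Re}\langle Au_0,u_0\rangle$ and $h\in C^1([0,\infty[,\mathbb{R})\cap C^\infty(]0,\infty[,\mathbb{R})$.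
   Context: A semigroup $e^{-tA}$ is holomorphic if it extends to a holomorphic family $e^{-zA}$ for $z$ in an open sector $\{z\in\mathbb{C}:|\arg z|<\delta\}$ for some $\delta>0$. The numerical range of $A$ is $\nu(A)=\{\langle Ax,x\rangle: x\in D(A),\ |x|=1\}$, and $m(A)=\inf\operatorname{Re}\nu(A)$. *)

theory Defs
  imports "HOL-Analysis.Analysis"
begin

text \<open>A complex Hilbert space is modelled as a real Hilbert space (type class
  real_inner + complete_space) together with an orthogonal complex structure J
  (multiplication by the imaginary unit).  The complex inner product
  (linear in the first, conjugate linear in the second argument) is
  cinner J x y = inner x y + i * inner x (J y); its induced norm is the norm of the type.\<close>

definition complex_structure :: "('a::real_inner \<Rightarrow> 'a) \<Rightarrow> bool" where
  "complex_structure J \<longleftrightarrow> linear J \<and> (\<forall>x. J (J x) = - x) \<and> (\<forall>x y. inner (J x) (J y) = inner x y)"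

definition cscale :: "('a::real_vector \<Rightarrow> 'a) \<Rightarrow> complex \<Rightarrow> 'a \<Rightarrow> 'a" where
  "cscale J c x = Re c *\<^sub>R x + Im c *\<^sub>R J x"

definition cinner :: "('a::real_inner \<Rightarrow> 'a) \<Rightarrow> 'a \<Rightarrow> 'a \<Rightarrow> complex" where
  "cinner J x y = Complex (inner x y) (inner x (J y))"

definition bounded_clinear_J :: "('a::real_normed_vector \<Rightarrow> 'a) \<Rightarrow> ('a \<Rightarrow> 'a) \<Rightarrow> bool" where
  "bounded_clinear_J J L \<longleftrightarrow> bounded_linear L \<and> (\<forall>x. L (J x) = J (L x))"

definition C0_semigroup :: "('a::real_normed_vector \<Rightarrow> 'a) \<Rightarrow> (real \<Rightarrow> 'a \<Rightarrow> 'a) \<Rightarrow> bool" where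
  "C0_semigroup J T \<longleftrightarrow>
     (\<forall>t\<ge>0. bounded_clinear_J J (T t)) \<and> T 0 = id \<and>
     (\<forall>s\<ge>0. \<forall>t\<ge>0. T (s + t) = T s \<circ> T t) \<and>
     (\<forall>x. ((\<lambda>t. T t x) \<longlongrightarrow> x) (at_right 0))"

definition is_generator :: "(real \<Rightarrow> 'a::real_normed_vector \<Rightarrow> 'a) \<Rightarrow> 'a set \<Rightarrow> ('a \<Rightarrow> 'a) \<Rightarrow> bool" where
  "is_generator T D B \<longleftrightarrow>
     D = {x. \<exists>v. ((\<lambda>t. (T t x - x) /\<^sub>R t) \<longlongrightarrow> v) (at_right 0)} \<and>
     (\<forall>x\<in>D. ((\<lambda>t. (T t x - x) /\<^sub>R t) \<longlongrightarrow> B x) (at_right 0))"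

definition sector :: "real \<Rightarrow> complex set" where
  "sector \<delta> = {z. z \<noteq> 0 \<and> \<bar>Arg z\<bar> < \<delta>}"

text \<open>Holomorphic semigroup: T extends to a holomorphic family of bounded complex-linear
  operators on an open sector (holomorphy in the weak sense, which for operator-valued
  functions is equivalent to holomorphy in operator norm).\<close>
definition holomorphic_semigroup :: "('a::real_inner \<Rightarrow> 'a) \<Rightarrow> (real \<Rightarrow> 'a \<Rightarrow> 'a) \<Rightarrow> bool" where
  "holomorphic_semigroup J T \<longleftrightarrow> C0_semigroup J T \<and>
     (\<exists>\<delta>>0. \<exists>S :: complex \<Rightarrow> 'a \<Rightarrow> 'a.
        (\<forall>z\<in>sector \<delta>. bounded_clinear_J J (S z)) \<and>
        (\<forall>t>0. S (complex_of_real t) = T t) \<and>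
        (\<forall>x y. (\<lambda>z. cinner J (S z x) y) holomorphic_on sector \<delta>))"

definition num_range :: "('a::real_inner \<Rightarrow> 'a) \<Rightarrow> 'a set \<Rightarrow> ('a \<Rightarrow> 'a) \<Rightarrow> complex set" where
  "num_range J D A = {cinner J (A x) x | x. x \<in> D \<and> norm x = 1}"

definition m_num :: "('a::real_inner \<Rightarrow> 'a) \<Rightarrow> 'a set \<Rightarrow> ('a \<Rightarrow> 'a) \<Rightarrow> real" where
  "m_num J D A = Inf (Re ` num_range J D A)"

definition pos_accretive :: "('a::real_inner \<Rightarrow> 'a) \<Rightarrow> 'a set \<Rightarrow> ('a \<Rightarrow> 'a) \<Rightarrow> bool" where
  "pos_accretive J D A \<longleftrightarrow> (\<forall>z\<in>num_range J D A. 0 < Re z)"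

definition adj_dom :: "('a::real_inner \<Rightarrow> 'a) \<Rightarrow> 'a set \<Rightarrow> ('a \<Rightarrow> 'a) \<Rightarrow> 'a set" where
  "adj_dom J D A = {y. \<exists>w. \<forall>x\<in>D. cinner J (A x) y = cinner J x w}"

definition adj :: "('a::real_inner \<Rightarrow> 'a) \<Rightarrow> 'a set \<Rightarrow> ('a \<Rightarrow> 'a) \<Rightarrow> 'a \<Rightarrow> 'a" where
  "adj J D A y = (SOME w. \<forall>x\<in>D. cinner J (A x) y = cinner J x w)"

definition hyponormal :: "('a::real_inner \<Rightarrow> 'a) \<Rightarrow> 'a set \<Rightarrow> ('a \<Rightarrow> 'a) \<Rightarrow> bool" where
  "hyponormal J D A \<longleftrightarrow> closure D = UNIV \<and> D \<subseteq> adj_dom J D A \<and>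
     (\<forall>x\<in>D. norm (adj J D A x) \<le> norm (A x))"

definition strictly_convex_on :: "real set \<Rightarrow> (real \<Rightarrow> real) \<Rightarrow> bool" where
  "strictly_convex_on S f \<longleftrightarrow> (\<forall>x\<in>S. \<forall>y\<in>S. x \<noteq> y \<longrightarrow> (\<forall>u. 0 < u \<and> u < 1 \<longrightarrow>
     f (u * x + (1 - u) * y) < u * f x + (1 - u) * f y))"

definition C1_on_closed_halfline :: "(real \<Rightarrow> real) \<Rightarrow> bool" where
  "C1_on_closed_halfline f \<longleftrightarrow> (\<exists>f'. (\<forall>t\<ge>0. (f has_real_derivative f' t) (at t within {0..}))
      \<and> continuous_on {0..} f')"

definition smooth_on :: "real set \<Rightarrow> (real \<Rightarrow> real) \<Rightarrow> bool" where
  "smooth_on S f \<longleftrightarrow> (\<exists>Df :: nat \<Rightarrow> real \<Rightarrow> real. Df 0 = f \<and>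
      (\<forall>n. \<forall>t\<in>S. (Df n has_real_derivative Df (Suc n) t) (at t)))"

end

theory Submission
  imports Defs "HOL-Complex_Analysis.Complex_Analysis"
begin

lemma cs_linear: "complex_structure J \<Longrightarrow> linear J"
  by (simp add: complex_structure_def)
lemma cs_JJ: "complex_structure J \<Longrightarrow> J (J x) = - x"
  by (simp add: complex_structure_def)
lemma cs_inner: "complex_structure J \<Longrightarrow> inner (J x) (J y) = inner x y"
  by (simp add: complex_structure_def)

lemma cs_norm: "complex_structure J \<Longrightarrow> norm (J x) = norm x"
  by (simp add: norm_eq_sqrt_inner cs_inner)

lemma cs_orth: assumes "complex_structure J" shows "inner y (J y) = 0"
proof -
  have "inner y (J y) = inner (J y) (J (J y))" using cs_inner[OF assms] by simp
  also have "\<dots> = - inner (J y) y" using cs_JJ[OF assms] by simp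
  finally show ?thesis by (simp add: inner_commute)
qed

lemma Re_cinner[simp]: "Re (cinner J x y) = inner x y"
  by (simp add: cinner_def)
lemma Im_cinner[simp]: "Im (cinner J x y) = inner x (J y)"
  by (simp add: cinner_def)

lemma cinner_add_left: "cinner J (x + y) z = cinner J x z + cinner J y z"
  by (simp add: complex_eq_iff inner_add_left)
lemma cinner_diff_left: "cinner J (x - y) z = cinner J x z - cinner J y z"
  by (simp add: complex_eq_iff inner_diff_left)
lemma cinner_scaleR_left: "cinner J (c *\<^sub>R x) z = of_real c * cinner J x z"
  by (simp add: complex_eq_iff)

lemma cinner_norm_le: assumes J: "complex_structure J"
  shows "norm (cinner J x y) \<le> norm x * norm y"
proof -
  define a where "a = inner x y"
  define b where "b = inner x (J y)"
  define w where "w = a *\<^sub>R y + b *\<^sub>R J y"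
  have xw: "inner x w = a^2 + b^2"
    by (simp add: w_def a_def b_def inner_add_right power2_eq_square)
  have ww: "inner w w = (a^2 + b^2) * (norm y)^2"
  proof -
    have "inner w w = a*a * inner y y + 2*a*b * inner y (J y) + b*b * inner (J y) (J y)"
      by (simp add: w_def inner_add_left inner_add_right inner_commute[of "J y" y] algebra_simps)
    also have "\<dots> = (a^2+b^2) * inner y y"
      using cs_orth[OF J, of y] cs_inner[OF J, of y y] by (simp add: power2_eq_square algebra_simps)
    finally show ?thesis by (simp add: power2_norm_eq_inner)
  qed
  have nw: "norm w = sqrt (a^2+b^2) * norm y"
    using ww by (simp add: norm_eq_sqrt_inner real_sqrt_mult)
  have "a^2 + b^2 \<le> norm x * norm w"
    using xw Cauchy_Schwarz_ineq2[of x w] by simp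
  also have "\<dots> = norm x * sqrt (a^2+b^2) * norm y" by (simp add: nw)
  finally have *: "sqrt (a^2+b^2) * sqrt (a^2+b^2) \<le> sqrt (a^2+b^2) * (norm x * norm y)"
    by (simp add: mult_ac)
  have "sqrt (a^2+b^2) \<le> norm x * norm y"
  proof (cases "sqrt (a^2+b^2) = 0")
    case True then show ?thesis by simp
  next
    case False
    then have "sqrt (a^2+b^2) > 0" using real_sqrt_ge_zero[of "a^2+b^2"] by (simp add: less_le)
    then show ?thesis using * by (metis mult_le_cancel_left_pos)
  qed
  moreover have "norm (cinner J x y) = sqrt (a^2+b^2)"
    by (simp add: cmod_def a_def b_def)
  ultimately show ?thesis by simp
qed

section \<open>Uniform boundedness\<close>

lemma ubp:
  fixes F :: "'a::{real_inner,complete_space} set"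
  assumes wb: "\<And>y. \<exists>K. \<forall>v\<in>F. \<bar>inner v y\<bar> \<le> K"
  shows "\<exists>M. \<forall>v\<in>F. norm v \<le> M"
proof -
  define E where "E n = {y. \<forall>v\<in>F. \<bar>inner v y\<bar> \<le> real n}" for n :: nat
  have clE: "closed (E n)" for n
  proof -
    have "E n = (\<Inter>v\<in>F. {y. \<bar>inner v y\<bar> \<le> real n})" by (auto simp: E_def)
    moreover have "closed {y. \<bar>inner v y\<bar> \<le> real n}" for v
      by (intro closed_Collect_le continuous_intros)
    ultimately show ?thesis by auto
  qed
  have UE: "\<Union>(range E) = UNIV"
  proof -
    have "y \<in> \<Union>(range E)" for y :: 'a
    proof -
    obtain K where K: "\<forall>v\<in>F. \<bar>inner v y\<bar> \<le> K" using wb by blast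
    obtain n :: nat where "K \<le> real n" using real_arch_simple by blast
    then have "y \<in> E n" using K by (force simp: E_def)
    then show "y \<in> \<Union>(range E)" by blast
    qed
    then show ?thesis by auto
  qed
  have "\<exists>n. interior (E n) \<noteq> {}"
  proof (rule ccontr)
    assume "\<not> ?thesis"
    then have "euclidean interior_of \<Union>(range E) = {}"
    proof (intro Baire_category_alt)
      show "completely_metrizable_space (euclidean :: 'a topology) \<or> locally_compact_space (euclidean :: 'a topology) \<and> regular_space (euclidean :: 'a topology)"
        using completely_metrizable_space_euclidean by blast
      show "countable (range E)" by simp
      fix T assume "T \<in> range E"
      then obtain n where "T = E n" by blast
      show "closedin euclidean T \<and> euclidean interior_of T = {}"
      proof
        show "closedin euclidean T" using clE \<open>T = E n\<close> closed_closedin by blast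
        have "interior (E n) = {}" using \<open>\<not> (\<exists>n. interior (E n) \<noteq> {})\<close> by blast
        then show "euclidean interior_of T = {}" using \<open>T = E n\<close> by simp
      qed
    qed
    then show False using UE by simp
  qed
  then obtain n y0 where "y0 \<in> interior (E n)" by blast
  then obtain r where r0: "r > 0" and rb: "ball y0 r \<subseteq> interior (E n)"
    by (meson openE open_interior)
  have r: "r > 0" "ball y0 r \<subseteq> E n" using r0 rb interior_subset by blast+
  have "norm v \<le> 4 * real n / r" if v: "v \<in> F" for v
  proof (cases "v = 0")
    case True then show ?thesis using r by simp
  next
    case False
    define y where "y = y0 + ((r/2) / norm v) *\<^sub>R v"
    have "dist y0 y < r" using r False by (simp add: y_def dist_norm)
    then have "y \<in> E n" using r(2) by (auto simp: dist_commute)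
    then have a: "\<bar>inner v y\<bar> \<le> real n" using v by (auto simp: E_def)
    have "y0 \<in> E n" using r by (meson centre_in_ball subsetD)
    then have b: "\<bar>inner v y0\<bar> \<le> real n" using v by (auto simp: E_def)
    have "inner v y = inner v y0 + (r/2) * norm v"
    proof -
      have nv: "inner v v = norm v * norm v" by (metis power2_norm_eq_inner power2_eq_square)
      show ?thesis using False by (simp add: y_def inner_add_right nv)
    qed
    then have "(r/2) * norm v \<le> 2 * real n" using a b by linarith
    then show ?thesis using r by (simp add: field_simps)
  qed
  then show ?thesis by blast
qed

lemma adj_prop:
  assumes hyp: "hyponormal J D A" and x: "x \<in> D" and z: "z \<in> D"
  shows "cinner J (A z) x = cinner J z (adj J D A x)"
proof -
  have "x \<in> adj_dom J D A" using hyp x by (auto simp: hyponormal_def)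
  then have "\<exists>w. \<forall>z\<in>D. cinner J (A z) x = cinner J z w" by (simp add: adj_dom_def)
  then have "\<forall>z\<in>D. cinner J (A z) x = cinner J z (adj J D A x)"
    unfolding adj_def by (rule someI_ex)
  then show ?thesis using z by blast
qed

lemma part_a_hom:
  assumes J: "complex_structure J" and hyp: "hyponormal J D A"
    and x: "x \<in> D" and Ax: "A x \<in> D"
  shows "2 * (inner (A x) x)^2 \<le> (inner (A (A x)) x + (norm (A x))^2) * (norm x)^2"
proof -
  define a where "a = A x"
  define b where "b = adj J D A x"
  have 1: "inner (A (A x)) x = inner a b"
    using arg_cong[OF adj_prop[OF hyp x Ax], of Re] by (simp add: a_def b_def)
  have 2: "inner (A x) x = inner x b"
    using arg_cong[OF adj_prop[OF hyp x x], of Re] by (simp add: b_def)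
  have nb: "norm b \<le> norm a" using hyp x by (auto simp: hyponormal_def a_def b_def)
  define m where "m = inner a x"
  have "inner (a + b) x = inner a x + inner b x" by (simp add: inner_add_left)
  also have "inner b x = m" using 2 by (simp add: m_def a_def inner_commute)
  finally have "inner (a + b) x = 2 * m" by (simp add: m_def)
  then have c1: "(2*m)^2 \<le> (norm (a+b))^2 * (norm x)^2"
    using Cauchy_Schwarz_ineq[of "a+b" x] by (simp add: power2_norm_eq_inner)
  have "(norm (a+b))^2 = (norm a)^2 + 2 * inner a b + (norm b)^2"
    by (simp add: power2_norm_eq_inner inner_add_left inner_add_right inner_commute)
  moreover have "(norm b)^2 \<le> (norm a)^2"
    using nb by (simp add: power_mono)
  ultimately have c2: "(norm (a+b))^2 \<le> 2 * (norm a)^2 + 2 * inner a b" by simp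
  have "4 * m^2 \<le> (2 * (norm a)^2 + 2 * inner a b) * (norm x)^2"
    using c1 mult_right_mono[OF c2, of "(norm x)^2"] by (simp add: power_mult_distrib)
  then show ?thesis by (simp add: 1 m_def a_def algebra_simps)
qed

locale hsg =
  fixes J :: "'a::{real_inner,complete_space} \<Rightarrow> 'a"
    and T :: "real \<Rightarrow> 'a \<Rightarrow> 'a"
    and D :: "'a set"
    and A :: "'a \<Rightarrow> 'a"
  assumes J: "complex_structure J"
    and hol: "holomorphic_semigroup J T"
    and gen: "is_generator T D (\<lambda>x. - A x)"
    and acc: "pos_accretive J D A"
    and hyp: "hyponormal J D A"
begin

lemma C0: "C0_semigroup J T" using hol by (simp add: holomorphic_semigroup_def)

lemma blin: "0 \<le> t \<Longrightarrow> bounded_linear (T t)"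
  using C0 by (simp add: C0_semigroup_def bounded_clinear_J_def)

lemma T0[simp]: "T 0 x = x"
  using C0 by (simp add: C0_semigroup_def)

lemma Tadd: "0 \<le> s \<Longrightarrow> 0 \<le> t \<Longrightarrow> T (s + t) x = T s (T t x)"
  using C0 by (simp add: C0_semigroup_def)

lemma Tc0: "((\<lambda>t. T t x) \<longlongrightarrow> x) (at_right 0)"
  using C0 by (simp add: C0_semigroup_def)

lemma T_add: "0 \<le> t \<Longrightarrow> T t (x + y) = T t x + T t y"
  using blin bounded_linear.linear linear_add by blast
lemma T_diff: "0 \<le> t \<Longrightarrow> T t (x - y) = T t x - T t y"
  using blin bounded_linear.linear linear_diff by blast
lemma T_minus: "0 \<le> t \<Longrightarrow> T t (- x) = - T t x"
  using blin bounded_linear.linear linear_neg by blast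
lemma T_scaleR: "0 \<le> t \<Longrightarrow> T t (c *\<^sub>R x) = c *\<^sub>R T t x"
  using blin bounded_linear.linear linear_scale by blast
lemma T_zero: "0 \<le> t \<Longrightarrow> T t 0 = 0"
  using blin bounded_linear.linear linear_0 by blast

lemma gen_D: "D = {x. \<exists>v. ((\<lambda>t. (T t x - x) /\<^sub>R t) \<longlongrightarrow> v) (at_right 0)}"
  using gen by (simp add: is_generator_def)

lemma gen_lim: "x \<in> D \<Longrightarrow> ((\<lambda>t. (T t x - x) /\<^sub>R t) \<longlongrightarrow> - A x) (at_right 0)"
  using gen by (simp add: is_generator_def)

lemma gen_memI:
  assumes "((\<lambda>t. (T t x - x) /\<^sub>R t) \<longlongrightarrow> v) (at_right 0)"
  shows "x \<in> D" "A x = - v"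
proof -
  show xD: "x \<in> D" using assms gen_D by blast
  have "- A x = v"
    using tendsto_unique[OF trivial_limit_at_right_real gen_lim[OF xD] assms] .
  then show "A x = - v" by (metis minus_minus)
qed

lemma ev_pos: "eventually (\<lambda>t::real. 0 < t) (at_right 0)"
  by (simp add: eventually_at_right_less)

lemma D_add:
  assumes x: "x \<in> D" and y: "y \<in> D"
  shows "x + y \<in> D" "A (x + y) = A x + A y"
proof -
  have ev: "eventually (\<lambda>t. (T t x - x) /\<^sub>R t + (T t y - y) /\<^sub>R t = (T t (x + y) - (x + y)) /\<^sub>R t) (at_right 0)"
    using ev_pos by eventually_elim (simp add: T_add algebra_simps)
  have "((\<lambda>t. (T t (x + y) - (x + y)) /\<^sub>R t) \<longlongrightarrow> - A x + - A y) (at_right 0)"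
    using Lim_transform_eventually[OF tendsto_add[OF gen_lim[OF x] gen_lim[OF y]] ev] .
  from gen_memI[OF this] show "x + y \<in> D" "A (x + y) = A x + A y" by simp_all
qed

lemma D_scaleR:
  assumes x: "x \<in> D"
  shows "c *\<^sub>R x \<in> D" "A (c *\<^sub>R x) = c *\<^sub>R A x"
proof -
  have ev: "eventually (\<lambda>t. c *\<^sub>R ((T t x - x) /\<^sub>R t) = (T t (c *\<^sub>R x) - c *\<^sub>R x) /\<^sub>R t) (at_right 0)"
    using ev_pos by eventually_elim (simp add: T_scaleR algebra_simps)
  have "((\<lambda>t. (T t (c *\<^sub>R x) - c *\<^sub>R x) /\<^sub>R t) \<longlongrightarrow> c *\<^sub>R (- A x)) (at_right 0)"
    using Lim_transform_eventually[OF tendsto_scaleR[OF tendsto_const gen_lim[OF x]] ev] .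
  from gen_memI[OF this] show "c *\<^sub>R x \<in> D" "A (c *\<^sub>R x) = c *\<^sub>R A x" by simp_all
qed

lemma D_minus: "x \<in> D \<Longrightarrow> - x \<in> D \<and> A (- x) = - A x"
  using D_scaleR[of x "-1"] by simp

lemma D_diff: "x \<in> D \<Longrightarrow> y \<in> D \<Longrightarrow> x - y \<in> D \<and> A (x - y) = A x - A y"
  using D_add[of x "- y"] D_minus[of y] by simp

lemma D_zero: "0 \<in> D" "A 0 = 0"
proof -
  have ev: "eventually (\<lambda>t. (0::'a) = (T t 0 - 0) /\<^sub>R t) (at_right 0)"
    using ev_pos by eventually_elim (simp add: T_zero)
  have "((\<lambda>t. (T t 0 - 0) /\<^sub>R t) \<longlongrightarrow> 0) (at_right 0)"
    using Lim_transform_eventually[OF tendsto_const ev] .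
  from gen_memI[OF this] show "0 \<in> D" "A 0 = 0" by simp_all
qed

lemma commute:
  assumes x: "x \<in> D" and t: "0 \<le> t"
  shows "T t x \<in> D" "A (T t x) = T t (A x)"
proof -
  have ev: "eventually (\<lambda>s. T t ((T s x - x) /\<^sub>R s) = (T s (T t x) - T t x) /\<^sub>R s) (at_right 0)"
    using ev_pos
  proof eventually_elim
    case (elim s)
    have "T s (T t x) = T t (T s x)" using Tadd[of s t x] Tadd[of t s x] t elim by (simp add: add.commute)
    then show ?case using t by (simp add: T_scaleR T_diff)
  qed
  have "((\<lambda>s. (T s (T t x) - T t x) /\<^sub>R s) \<longlongrightarrow> T t (- A x)) (at_right 0)"
    using Lim_transform_eventually[OF bounded_linear.tendsto[OF blin[OF t] gen_lim[OF x]] ev] .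
  from gen_memI[OF this] show "T t x \<in> D" "A (T t x) = T t (A x)" using T_minus[OF t] by simp_all
qed

lemma acc_pos:
  assumes x: "x \<in> D" and x0: "x \<noteq> 0"
  shows "inner (A x) x > 0"
proof -
  define v where "v = (1 / norm x) *\<^sub>R x"
  have vD: "v \<in> D" using D_scaleR[OF x] by (simp add: v_def)
  have nv: "norm v = 1" using x0 by (simp add: v_def)
  have "cinner J (A v) v \<in> num_range J D A" using vD nv by (auto simp: num_range_def)
  then have "0 < inner (A v) v" using acc by (auto simp: pos_accretive_def)
  also have "inner (A v) v = inner (A x) x / (norm x)^2"
    using D_scaleR(2)[OF x] by (simp add: v_def power2_eq_square)
  finally show ?thesis using x0 by (simp add: zero_less_divide_iff)
qed

lemma m_le:
  assumes x: "x \<in> D" and nx: "norm x = 1"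
  shows "m_num J D A \<le> inner (A x) x"
proof -
  have mem: "inner (A x) x \<in> Re ` num_range J D A" using x nx
    by (force simp: num_range_def)
  have "bdd_below (Re ` num_range J D A)"
    using acc by (auto simp: pos_accretive_def bdd_below_def intro!: exI[of _ 0] less_imp_le)
  then show ?thesis unfolding m_num_def using cInf_lower[OF mem] by simp
qed

end

lemma kern_id:
  fixes f p h k :: complex
  assumes "p \<noteq> 0" "p - h \<noteq> 0" "p - k \<noteq> 0" "h \<noteq> 0" "k \<noteq> 0"
  shows "(f/(p-h) - f/p)/h - (f/(p-k) - f/p)/k = f*(h-k)/(p*(p-h)*(p-k))"
proof -
  have e1: "(f/(p-h) - f/p)/h = f/(p*(p-h))" using assms by (simp add: divide_simps) (simp add: algebra_simps)
  have e2: "(f/(p-k) - f/p)/k = f/(p*(p-k))" using assms by (simp add: divide_simps) (simp add: algebra_simps)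
  have e3: "f/(p*(p-h)) - f/(p*(p-k)) = f*(h-k)/(p*(p-h)*(p-k))" using assms by (simp add: divide_simps) (simp add: algebra_simps)
  show ?thesis using e1 e2 e3 by simp
qed
lemma val_id:
  fixes c a b d h k :: complex
  shows "(c * a - c * b)/h - (c * d - c * b)/k = c * ((a - b)/h - (d - b)/k)"
proof -
  have "(c * a - c * b)/h = c * ((a - b)/h)" by (metis right_diff_distrib times_divide_eq_right)
  moreover have "(c * d - c * b)/k = c * ((d - b)/k)" by (metis right_diff_distrib times_divide_eq_right)
  ultimately show ?thesis by (simp add: right_diff_distrib)
qed

lemma cauchy_dq:
  fixes \<phi> :: "complex \<Rightarrow> complex"
  assumes holo: "\<phi> holomorphic_on ball a R" and \<rho>: "0 < \<rho>" "\<rho> < R"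
    and B: "\<And>u. norm (u - a) = \<rho> \<Longrightarrow> norm (\<phi> u) \<le> B"
    and h: "h \<noteq> 0" "norm h \<le> \<rho>/2" and k: "k \<noteq> 0" "norm k \<le> \<rho>/2"
  shows "norm ((\<phi> (a+h) - \<phi> a)/h - (\<phi> (a+k) - \<phi> a)/k) \<le> 4 * B * norm (h - k) / \<rho>^2"
proof -
  have sub: "cball a \<rho> \<subseteq> ball a R" using \<rho> by (auto simp: dist_norm)
  have cont: "continuous_on (cball a \<rho>) \<phi>"
    using holomorphic_on_imp_continuous_on[OF holo] sub continuous_on_subset by blast
  have holo': "\<phi> holomorphic_on ball a \<rho>"
    using holo sub ball_subset_cball holomorphic_on_subset by blast
  have I: "((\<lambda>u. \<phi> u/(u-w)) has_contour_integral (2 * of_real pi * \<i> * \<phi> w)) (circlepath a \<rho>)"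
    if "norm (w - a) < \<rho>" for w
    using Cauchy_integral_circlepath[OF cont holo' that] .
  have Ih: "((\<lambda>u. \<phi> u/(u-(a+h))) has_contour_integral (2 * of_real pi * \<i> * \<phi> (a+h))) (circlepath a \<rho>)"
    using I[of "a+h"] h \<rho> by simp
  have Ik: "((\<lambda>u. \<phi> u/(u-(a+k))) has_contour_integral (2 * of_real pi * \<i> * \<phi> (a+k))) (circlepath a \<rho>)"
    using I[of "a+k"] k \<rho> by simp
  have I0: "((\<lambda>u. \<phi> u/(u-a)) has_contour_integral (2 * of_real pi * \<i> * \<phi> a)) (circlepath a \<rho>)"
    using I[of a] \<rho> by simp
  define X where "X = (\<phi> (a+h) - \<phi> a)/h - (\<phi> (a+k) - \<phi> a)/k"
  have G: "((\<lambda>u. (\<phi> u/(u-(a+h)) - \<phi> u/(u-a))/h - (\<phi> u/(u-(a+k)) - \<phi> u/(u-a))/k)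
      has_contour_integral ((2 * of_real pi * \<i> * \<phi> (a+h) - 2 * of_real pi * \<i> * \<phi> a)/h
         - (2 * of_real pi * \<i> * \<phi> (a+k) - 2 * of_real pi * \<i> * \<phi> a)/k)) (circlepath a \<rho>)"
    by (intro has_contour_integral_diff has_contour_integral_div Ih Ik I0)
  have val: "(2 * of_real pi * \<i> * \<phi> (a+h) - 2 * of_real pi * \<i> * \<phi> a)/h
         - (2 * of_real pi * \<i> * \<phi> (a+k) - 2 * of_real pi * \<i> * \<phi> a)/k = 2 * of_real pi * \<i> * X"
    unfolding X_def by (rule val_id)
  define G' where "G' u = \<phi> u * (h - k) / ((u-a)*(u-(a+h))*(u-(a+k)))" for u
  have nz: "u - a \<noteq> 0" "u - (a+h) \<noteq> 0" "u - (a+k) \<noteq> 0" if "norm (u - a) = \<rho>" for u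
  proof -
    show "u - a \<noteq> 0" using that \<rho> by auto
    have "norm (u - (a+h)) \<ge> norm (u - a) - norm h" using norm_triangle_ineq2[of "u - a" h] by (simp add: diff_diff_eq)
    then show "u - (a+h) \<noteq> 0" using that \<rho> h by auto
    have "norm (u - (a+k)) \<ge> norm (u - a) - norm k" using norm_triangle_ineq2[of "u - a" k] by (simp add: diff_diff_eq)
    then show "u - (a+k) \<noteq> 0" using that \<rho> k by auto
  qed
  have G2: "(G' has_contour_integral (2 * of_real pi * \<i> * X)) (circlepath a \<rho>)"
  proof (rule has_contour_integral_eq[OF G[unfolded val]])
    fix u assume "u \<in> path_image (circlepath a \<rho>)"
    then have u: "norm (u - a) = \<rho>" using \<rho> by (simp add: dist_norm norm_minus_commute)
    show "(\<phi> u/(u-(a+h)) - \<phi> u/(u-a))/h - (\<phi> u/(u-(a+k)) - \<phi> u/(u-a))/k = G' u"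
    proof -
      have e: "u - (a+h) = (u-a) - h" "u - (a+k) = (u-a) - k" by simp_all
      show ?thesis unfolding G'_def e using kern_id[of "u-a" h k "\<phi> u"] nz[OF u] h k e by simp
    qed
  qed
  have B0: "0 \<le> B" using B[of "a + of_real \<rho>"] \<rho> by (smt (verit) norm_ge_zero add_diff_cancel_left' norm_of_real)
  have bnd: "norm (G' u) \<le> B * norm (h - k) / (\<rho> * (\<rho>/2) * (\<rho>/2))" if u: "norm (u - a) = \<rho>" for u
  proof -
    have l1: "norm (u - (a+h)) \<ge> \<rho>/2"
    proof -
      have "norm (u - (a+h)) \<ge> norm (u - a) - norm h" using norm_triangle_ineq2[of "u - a" h] by (simp add: diff_diff_eq)
      then show ?thesis using u h by linarith
    qed
    have l2: "norm (u - (a+k)) \<ge> \<rho>/2"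
    proof -
      have "norm (u - (a+k)) \<ge> norm (u - a) - norm k" using norm_triangle_ineq2[of "u - a" k] by (simp add: diff_diff_eq)
      then show ?thesis using u k by linarith
    qed
    have den: "\<rho> * (\<rho>/2) * (\<rho>/2) \<le> norm ((u-a)*(u-(a+h))*(u-(a+k)))"
      unfolding norm_mult using u l1 l2 \<rho> by (intro mult_mono) auto
    have num: "norm (\<phi> u * (h - k)) \<le> B * norm (h - k)"
      unfolding norm_mult using B[OF u] by (intro mult_right_mono) auto
    have "norm (G' u) = norm (\<phi> u * (h - k)) / norm ((u-a)*(u-(a+h))*(u-(a+k)))"
      unfolding G'_def by (simp add: norm_divide)
    also have "\<dots> \<le> B * norm (h - k) / (\<rho> * (\<rho>/2) * (\<rho>/2))"
      using num den \<rho> B0 by (intro frac_le) auto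
    finally show ?thesis .
  qed
  have "norm (2 * of_real pi * \<i> * X) \<le> B * norm (h - k) / (\<rho> * (\<rho>/2) * (\<rho>/2)) * (2 * pi * \<rho>)"
    using has_contour_integral_bound_circlepath[OF G2 _ \<rho>(1) bnd] B0 \<rho> by simp
  then have "2 * pi * norm X \<le> B * norm (h - k) / (\<rho> * (\<rho>/2) * (\<rho>/2)) * (2 * pi * \<rho>)"
    by (simp add: norm_mult)
  then have "(2*pi) * norm X \<le> (2*pi) * (B * norm (h - k) / (\<rho> * (\<rho>/2) * (\<rho>/2)) * \<rho>)"
    by (simp only: mult_ac)
  then have "norm X \<le> B * norm (h - k) / (\<rho> * (\<rho>/2) * (\<rho>/2)) * \<rho>"
    using mult_le_cancel_left_pos[of "2*pi"] pi_gt_zero by simp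
  also have "\<dots> = 4 * B * norm (h - k) / \<rho>^2" using \<rho> by (simp add: field_simps power2_eq_square)
  finally show ?thesis by (simp add: X_def)
qed

lemma dq_deriv:
  fixes f :: "real \<Rightarrow> 'a::{real_normed_vector,complete_space}"
  assumes \<epsilon>: "0 < \<epsilon>" and C: "0 \<le> C"
    and L: "\<And>h k. h \<noteq> 0 \<Longrightarrow> \<bar>h\<bar> \<le> \<epsilon> \<Longrightarrow> k \<noteq> 0 \<Longrightarrow> \<bar>k\<bar> \<le> \<epsilon> \<Longrightarrow>
       norm ((f (a+h) - f a) /\<^sub>R h - (f (a+k) - f a) /\<^sub>R k) \<le> C * \<bar>h - k\<bar>"
  shows "\<exists>v. (f has_vector_derivative v) (at a)"
proof -
  define Q where "Q h = (f (a+h) - f a) /\<^sub>R h" for h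
  define s where "s n = Q (\<epsilon> / real (Suc n))" for n
  have sn: "\<epsilon> / real (Suc n) \<noteq> 0" "\<bar>\<epsilon> / real (Suc n)\<bar> \<le> \<epsilon>" "0 < \<epsilon> / real (Suc n)" for n
    using \<epsilon> by (auto simp: field_simps)
  have snM: "\<epsilon> / real (Suc n) \<le> \<epsilon> / real (Suc M)" if "M \<le> n" for n M
    using \<epsilon> that by (intro divide_left_mono) auto
  have "Cauchy s"
  proof (rule metric_CauchyI)
    fix e :: real assume e: "0 < e"
    obtain M :: nat where M: "C * \<epsilon> / e < real M" using reals_Archimedean2 by blast
    have "dist (s m) (s n) < e" if "M \<le> m" "M \<le> n" for m n
    proof -
      have "dist (s m) (s n) \<le> C * \<bar>\<epsilon> / real (Suc m) - \<epsilon> / real (Suc n)\<bar>"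
        unfolding s_def Q_def dist_norm using L[OF sn(1,2) sn(1,2)] by blast
      also have "\<bar>\<epsilon> / real (Suc m) - \<epsilon> / real (Suc n)\<bar> \<le> \<epsilon> / real (Suc M)"
        using snM[OF that(1)] snM[OF that(2)] sn(3)[of m] sn(3)[of n] by linarith
      then have "C * \<bar>\<epsilon> / real (Suc m) - \<epsilon> / real (Suc n)\<bar> \<le> C * (\<epsilon> / real (Suc M))"
        using C by (rule mult_left_mono)
      also have "C * (\<epsilon> / real (Suc M)) < e"
      proof -
        have "C * \<epsilon> < e * real M" using M e by (simp add: field_simps)
        also have "\<dots> \<le> e * real (Suc M)" using e by simp
        finally show ?thesis by (simp add: field_simps)
      qed
      finally show ?thesis .
    qed
    then show "\<exists>M. \<forall>m\<ge>M. \<forall>n\<ge>M. dist (s m) (s n) < e" by blast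
  qed
  then obtain v where v: "s \<longlonglongrightarrow> v" using Cauchy_convergent_iff convergent_def by blast
  have eps0: "(\<lambda>n. \<epsilon> / real (Suc n)) \<longlonglongrightarrow> 0"
    using LIMSEQ_Suc[OF lim_const_over_n[of \<epsilon>]] .
  have bound: "norm (Q h - v) \<le> C * \<bar>h\<bar>" if h: "h \<noteq> 0" "\<bar>h\<bar> \<le> \<epsilon>" for h
  proof (rule tendsto_le[OF trivial_limit_sequentially])
    show "(\<lambda>n. C * \<bar>h - \<epsilon> / real (Suc n)\<bar>) \<longlonglongrightarrow> C * \<bar>h\<bar>"
      using tendsto_mult[OF tendsto_const tendsto_rabs[OF tendsto_diff[OF tendsto_const eps0]], of C h] by simp
    show "(\<lambda>n. norm (Q h - s n)) \<longlonglongrightarrow> norm (Q h - v)"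
      by (intro tendsto_intros v)
    show "\<forall>\<^sub>F n in sequentially. norm (Q h - s n) \<le> C * \<bar>h - \<epsilon> / real (Suc n)\<bar>"
      unfolding s_def Q_def using L[OF h sn(1,2)] by simp
  qed
  have "(f has_vector_derivative v) (at a)"
    unfolding has_vector_derivative_def has_derivative_at
  proof
    show "bounded_linear (\<lambda>h. h *\<^sub>R v)" by (rule bounded_linear_scaleR_left)
    have lim: "((\<lambda>h::real. C * \<bar>h\<bar>) \<longlongrightarrow> 0) (at 0)"
      using tendsto_mult[OF tendsto_const tendsto_rabs[OF tendsto_ident_at], of C 0 UNIV] by simp
    have ev: "eventually (\<lambda>h. norm (norm (f (a + h) - f a - h *\<^sub>R v) / norm h) \<le> C * \<bar>h\<bar>) (at 0)"
      unfolding eventually_at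
    proof (intro exI[of _ \<epsilon>] conjI ballI impI)
      show "0 < \<epsilon>" by fact
      fix h :: real assume "h \<in> UNIV" and hh: "h \<noteq> 0 \<and> dist h 0 < \<epsilon>"
      then have h0: "h \<noteq> 0" "\<bar>h\<bar> \<le> \<epsilon>" by auto
      have "f (a + h) - f a - h *\<^sub>R v = h *\<^sub>R (Q h - v)" using h0 by (simp add: Q_def algebra_simps)
      then have "norm (f (a + h) - f a - h *\<^sub>R v) / norm h = norm (Q h - v)" using h0 by simp
      then show "norm (norm (f (a + h) - f a - h *\<^sub>R v) / norm h) \<le> C * \<bar>h\<bar>" using bound[OF h0] by simp
    qed
    show "(\<lambda>h. norm (f (a + h) - f a - h *\<^sub>R v) / norm h) \<midarrow>0\<rightarrow> 0"
      by (rule Lim_null_comparison[OF ev lim])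
  qed
  then show ?thesis by blast
qed

lemma sector_ball:
  assumes d: "0 < \<delta>" and t: "0 < t"
  shows "\<exists>R>0. ball (complex_of_real t) R \<subseteq> sector \<delta>"
proof -
  have "complex_of_real t \<notin> \<real>\<^sub>\<le>\<^sub>0" using t by (simp add: complex_nonpos_Reals_iff)
  then have "continuous (at (complex_of_real t)) Arg" by (rule continuous_at_Arg)
  then obtain e where e: "e > 0" "\<And>z. dist z (complex_of_real t) < e \<Longrightarrow> dist (Arg z) (Arg (complex_of_real t)) < \<delta>"
    unfolding continuous_at_eps_delta using d by blast
  define R where "R = min e t"
  have "ball (complex_of_real t) R \<subseteq> sector \<delta>"
  proof
    fix z assume z: "z \<in> ball (complex_of_real t) R"
    then have "dist z (complex_of_real t) < e" by (simp add: R_def dist_commute)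
    then have "\<bar>Arg z\<bar> < \<delta>" using e(2) t by (simp add: dist_real_def)
    moreover have "z \<noteq> 0"
    proof
      assume "z = 0"
      then show False using z t by (simp add: R_def dist_norm)
    qed
    ultimately show "z \<in> sector \<delta>" by (simp add: sector_def)
  qed
  moreover have "R > 0" using e t by (simp add: R_def)
  ultimately show ?thesis by blast
qed

context hsg
begin

lemma hol_data:
  obtains \<delta> S where "0 < \<delta>" "\<And>z. z \<in> sector \<delta> \<Longrightarrow> bounded_clinear_J J (S z)"
    "\<And>t. 0 < t \<Longrightarrow> S (complex_of_real t) = T t"
    "\<And>x y. (\<lambda>z. cinner J (S z x) y) holomorphic_on sector \<delta>"
proof -
  from hol obtain \<delta> S where "0 < \<delta>" "\<forall>z\<in>sector \<delta>. bounded_clinear_J J (S z)"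
    "\<forall>t>0. S (complex_of_real t) = T t" "\<forall>x y. (\<lambda>z. cinner J (S z x) y) holomorphic_on sector \<delta>"
    unfolding holomorphic_semigroup_def by blast
  then show thesis using that by blast
qed

lemma orbit_deriv:
  assumes a: "0 < a"
  shows "\<exists>v. ((\<lambda>s. T s x) has_vector_derivative v) (at a)"
proof -
  obtain \<delta> S where d: "0 < \<delta>" and Sb: "\<And>z. z \<in> sector \<delta> \<Longrightarrow> bounded_clinear_J J (S z)"
    and ST: "\<And>t. 0 < t \<Longrightarrow> S (complex_of_real t) = T t"
    and Sh: "\<And>x y. (\<lambda>z. cinner J (S z x) y) holomorphic_on sector \<delta>"
    using hol_data by blast
  obtain R where R: "R > 0" "ball (complex_of_real a) R \<subseteq> sector \<delta>" using sector_ball[OF d a] by blast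
  define \<rho> where "\<rho> = min (R/2) (a/2)"
  have \<rho>: "0 < \<rho>" "\<rho> < R" "\<rho> \<le> a/2" using R a by (auto simp: \<rho>_def)
  have holb: "(\<lambda>z. cinner J (S z x) y) holomorphic_on ball (complex_of_real a) R" for y
    using Sh R(2) holomorphic_on_subset by blast
  have sph: "sphere (complex_of_real a) \<rho> \<subseteq> ball (complex_of_real a) R" using \<rho> by auto
  have wb: "\<exists>K. \<forall>v\<in>(\<lambda>z. S z x) ` sphere (complex_of_real a) \<rho>. \<bar>inner v y\<bar> \<le> K" for y
  proof -
    have "continuous_on (sphere (complex_of_real a) \<rho>) (\<lambda>z. cinner J (S z x) y)"
      using holomorphic_on_imp_continuous_on[OF holb] sph continuous_on_subset by blast
    then have "compact ((\<lambda>z. cinner J (S z x) y) ` sphere (complex_of_real a) \<rho>)"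
      by (intro compact_continuous_image) auto
    then obtain K where K: "\<forall>w\<in>(\<lambda>z. cinner J (S z x) y) ` sphere (complex_of_real a) \<rho>. norm w \<le> K"
      using compact_imp_bounded bounded_iff by metis
    have "\<bar>inner v y\<bar> \<le> K" if vv: "v \<in> (\<lambda>z. S z x) ` sphere (complex_of_real a) \<rho>" for v
    proof -
      obtain z where z: "z \<in> sphere (complex_of_real a) \<rho>" "v = S z x" using vv by blast
      have "\<bar>inner v y\<bar> = \<bar>Re (cinner J (S z x) y)\<bar>" using z by simp
      also have "\<dots> \<le> norm (cinner J (S z x) y)" by (rule abs_Re_le_cmod)
      also have "\<dots> \<le> K" using K z by blast
      finally show ?thesis .
    qed
    then show ?thesis by blast
  qed
  obtain M0 where M0: "\<forall>v\<in>(\<lambda>z. S z x) ` sphere (complex_of_real a) \<rho>. norm v \<le> M0"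
    using ubp[OF wb] by blast
  define M where "M = max M0 0"
  have M: "0 \<le> M" "\<And>z. norm (z - complex_of_real a) = \<rho> \<Longrightarrow> norm (S z x) \<le> M"
    using M0 by (auto simp: M_def dist_norm norm_minus_commute intro: le_max_iff_disj[THEN iffD2])
  define Q where "Q h = (T (a+h) x - T a x) /\<^sub>R h" for h
  have Qc: "cinner J (Q h) y = (cinner J (S (complex_of_real a + complex_of_real h) x) y - cinner J (S (complex_of_real a) x) y) / complex_of_real h"
    if h: "\<bar>h\<bar> \<le> a/2" for h y
  proof -
    have "S (complex_of_real a + complex_of_real h) = T (a+h)" using ST[of "a+h"] h a by simp
    moreover have "S (complex_of_real a) = T a" using ST a by simp
    ultimately show ?thesis
      unfolding Q_def by (simp add: cinner_scaleR_left cinner_diff_left divide_inverse mult.commute)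
  qed
  have L: "norm (Q h - Q k) \<le> (4 * M / \<rho>^2) * \<bar>h - k\<bar>"
    if h: "h \<noteq> 0" "\<bar>h\<bar> \<le> \<rho>/2" and k: "k \<noteq> 0" "\<bar>k\<bar> \<le> \<rho>/2" for h k
  proof -
    define y where "y = Q h - Q k"
    have hb: "\<bar>h\<bar> \<le> a/2" "\<bar>k\<bar> \<le> a/2" using h k \<rho> by auto
    have B: "norm (cinner J (S u x) y) \<le> M * norm y" if "norm (u - complex_of_real a) = \<rho>" for u
      using cinner_norm_le[OF J, of "S u x" y] M(2)[OF that] by (meson mult_right_mono norm_ge_zero order_trans)
    have "norm (cinner J y y) \<le> 4 * (M * norm y) * norm (complex_of_real h - complex_of_real k) / \<rho>^2"
    proof -
      have "cinner J y y = cinner J (Q h) y - cinner J (Q k) y" by (simp add: y_def cinner_diff_left)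
      also have "\<dots> = (cinner J (S (complex_of_real a + complex_of_real h) x) y - cinner J (S (complex_of_real a) x) y) / complex_of_real h
          - (cinner J (S (complex_of_real a + complex_of_real k) x) y - cinner J (S (complex_of_real a) x) y) / complex_of_real k"
        using Qc[OF hb(1)] Qc[OF hb(2)] by simp
      finally show ?thesis
        using cauchy_dq[OF holb \<rho>(1,2) B, of "complex_of_real h" "complex_of_real k"] h k by simp
    qed
    also have "norm (complex_of_real h - complex_of_real k) = \<bar>h - k\<bar>"
      by (metis norm_of_real of_real_diff)
    finally have *: "norm (cinner J y y) \<le> 4 * (M * norm y) * \<bar>h - k\<bar> / \<rho>^2" .
    have "norm y * norm y = inner y y" by (metis power2_norm_eq_inner power2_eq_square)
    also have "\<dots> = Re (cinner J y y)" by simp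
    also have "\<dots> \<le> norm (cinner J y y)" by (rule complex_Re_le_cmod)
    also have "\<dots> \<le> norm y * ((4 * M / \<rho>^2) * \<bar>h - k\<bar>)" using * by (simp add: field_simps)
    finally have **: "norm y * norm y \<le> norm y * ((4 * M / \<rho>^2) * \<bar>h - k\<bar>)" .
    show ?thesis
    proof (cases "norm y = 0")
      case True then show ?thesis using M(1) \<rho> by (simp add: y_def)
    next
      case False then have "norm y > 0" by simp
      then have "norm y \<le> (4 * M / \<rho>^2) * \<bar>h - k\<bar>" using ** by (metis mult_le_cancel_left_pos)
      then show ?thesis by (simp add: y_def)
    qed
  qed
  have "\<exists>v. ((\<lambda>s. T s x) has_vector_derivative v) (at a)"
  proof (rule dq_deriv[where f="\<lambda>s. T s x" and a=a and \<epsilon>="\<rho>/2" and C="4 * M / \<rho>^2"])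
    show "0 < \<rho>/2" using \<rho> by simp
    show "0 \<le> 4 * M / \<rho>^2" using M(1) by simp
    fix h k :: real assume "h \<noteq> 0" "\<bar>h\<bar> \<le> \<rho>/2" "k \<noteq> 0" "\<bar>k\<bar> \<le> \<rho>/2"
    then show "norm ((T (a+h) x - T a x) /\<^sub>R h - (T (a+k) x - T a x) /\<^sub>R k) \<le> 4 * M / \<rho>^2 * \<bar>h - k\<bar>"
      using L unfolding Q_def by blast
  qed
  then show ?thesis .
qed

end

lemma vd_quot:
  fixes f :: "real \<Rightarrow> 'a::real_normed_vector"
  assumes "(f has_vector_derivative v) (at t)"
  shows "((\<lambda>h. (f (t+h) - f t) /\<^sub>R h) \<longlongrightarrow> v) (at 0)"
proof -
  have lim: "((\<lambda>h. norm (f (t + h) - f t - h *\<^sub>R v) / norm h) \<longlongrightarrow> 0) (at 0)"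
    using assms unfolding has_vector_derivative_def has_derivative_at by blast
  have ev: "eventually (\<lambda>h. norm ((f (t+h) - f t) /\<^sub>R h - v) \<le> norm (f (t + h) - f t - h *\<^sub>R v) / norm h) (at 0)"
    unfolding eventually_at
  proof (intro exI[of _ 1] conjI ballI impI)
    fix h :: real assume "h \<in> UNIV" "h \<noteq> 0 \<and> dist h 0 < 1"
    then have h: "h \<noteq> 0" by simp
    have "f (t + h) - f t - h *\<^sub>R v = h *\<^sub>R ((f (t+h) - f t) /\<^sub>R h - v)" using h by (simp add: algebra_simps)
    then show "norm ((f (t+h) - f t) /\<^sub>R h - v) \<le> norm (f (t + h) - f t - h *\<^sub>R v) / norm h"
      using h by simp
  qed simp
  have "((\<lambda>h. (f (t+h) - f t) /\<^sub>R h - v) \<longlongrightarrow> 0) (at 0)"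
    by (rule Lim_null_comparison[OF _ lim]) (use ev in simp)
  then show ?thesis by (rule LIM_zero_cancel)
qed

context hsg
begin

lemma orbit_D:
  assumes t: "0 < t"
  shows "T t x \<in> D" "((\<lambda>s. T s x) has_vector_derivative (- A (T t x))) (at t)"
proof -
  obtain v where v: "((\<lambda>s. T s x) has_vector_derivative v) (at t)" using orbit_deriv[OF t] by blast
  have q: "((\<lambda>h. (T (t+h) x - T t x) /\<^sub>R h) \<longlongrightarrow> v) (at 0)" using vd_quot[OF v] by simp
  have q': "((\<lambda>h. (T (t+h) x - T t x) /\<^sub>R h) \<longlongrightarrow> v) (at_right 0)"
    using tendsto_mono[OF at_le[OF subset_UNIV] q] .
  have ev: "eventually (\<lambda>h. (T (t+h) x - T t x) /\<^sub>R h = (T h (T t x) - T t x) /\<^sub>R h) (at_right 0)"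
    using ev_pos by eventually_elim (use t in \<open>simp add: Tadd[symmetric] add.commute\<close>)
  have q'': "((\<lambda>h. (T h (T t x) - T t x) /\<^sub>R h) \<longlongrightarrow> v) (at_right 0)"
    using Lim_transform_eventually[OF q' ev] .
  show "T t x \<in> D" using gen_memI(1)[OF q''] .
  have "A (T t x) = - v" using gen_memI(2)[OF q''] .
  then show "((\<lambda>s. T s x) has_vector_derivative (- A (T t x))) (at t)" using v by simp
qed

lemma iter_props:
  "\<forall>s t. 0 < s \<longrightarrow> s \<le> t \<longrightarrow> (A^^n) (T t x) \<in> D \<and> (A^^n) (T t x) = T (t - s) ((A^^n) (T s x))"
proof (induction n)
  case 0
  show ?case
  proof (intro allI impI conjI)
    fix s t :: real assume st: "0 < s" "s \<le> t"
    show "(A^^0) (T t x) \<in> D" using orbit_D(1) st by simp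
    have "T t x = T ((t - s) + s) x" by simp
    also have "\<dots> = T (t - s) (T s x)" using st by (intro Tadd) auto
    finally show "(A^^0) (T t x) = T (t - s) ((A^^0) (T s x))" by simp
  qed
next
  case (Suc n)
  show ?case
  proof (intro allI impI conjI)
    fix s t :: real assume st: "0 < s" "s \<le> t"
    have sh: "(A^^Suc n) (T t x) = T (t - r) ((A^^Suc n) (T r x))" if r: "0 < r" "r \<le> t" for r
    proof -
      have yD: "(A^^n) (T r x) \<in> D" using Suc.IH r by blast
      have "(A^^Suc n) (T t x) = A ((A^^n) (T t x))" by simp
      also have "(A^^n) (T t x) = T (t - r) ((A^^n) (T r x))" using Suc.IH r by blast
      also have "A (T (t - r) ((A^^n) (T r x))) = T (t - r) (A ((A^^n) (T r x)))"
        using commute(2)[OF yD] r by simp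
      finally show ?thesis by simp
    qed
    show "(A^^Suc n) (T t x) = T (t - s) ((A^^Suc n) (T s x))" using sh st by blast
    have "(A^^Suc n) (T t x) = T (t - t/2) ((A^^Suc n) (T (t/2) x))" using sh[of "t/2"] st by simp
    also have "\<dots> = T (t/2) ((A^^Suc n) (T (t/2) x))" by simp
    also have "\<dots> \<in> D" using orbit_D(1) st by simp
    finally show "(A^^Suc n) (T t x) \<in> D" .
  qed
qed

lemma iter_D: "0 < t \<Longrightarrow> (A^^n) (T t x) \<in> D"
  using iter_props[of n x] by blast

lemma iter_shift: "0 < s \<Longrightarrow> s \<le> t \<Longrightarrow> (A^^n) (T t x) = T (t - s) ((A^^n) (T s x))"
  using iter_props[of n x] by blast

lemma iter_deriv:
  assumes t: "0 < t"
  shows "((\<lambda>\<tau>. (A^^n) (T \<tau> x)) has_vector_derivative (- (A^^Suc n) (T t x))) (at t)"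
proof -
  define s where "s = t/2"
  have s: "0 < s" "s < t" using t by (auto simp: s_def)
  define y where "y = (A^^n) (T s x)"
  have d1: "((\<lambda>\<sigma>. T \<sigma> y) has_vector_derivative (- A (T (t - s) y))) (at (t - s))"
    using orbit_D(2) s by simp
  have d2: "((\<lambda>\<tau>. \<tau> - s) has_vector_derivative 1) (at t)"
    by (auto intro!: derivative_eq_intros)
  have "(((\<lambda>\<sigma>. T \<sigma> y) \<circ> (\<lambda>\<tau>. \<tau> - s)) has_vector_derivative (1 *\<^sub>R (- A (T (t - s) y)))) (at t)"
    by (rule vector_diff_chain_at[OF d2]) (use d1 in simp)
  then have d3: "((\<lambda>\<tau>. T (\<tau> - s) y) has_vector_derivative (- A (T (t - s) y))) (at t)"
    by (simp add: o_def)
  have eq: "A (T (t - s) y) = (A^^Suc n) (T t x)"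
    using iter_shift[of s t n x] s by (simp add: y_def)
  show ?thesis
  proof (rule has_vector_derivative_transform_within_open[OF d3[unfolded eq] open_greaterThan[of s]])
    show "t \<in> {s<..}" using s by simp
    fix \<tau> assume "\<tau> \<in> {s<..}"
    then show "T (\<tau> - s) y = (A^^n) (T \<tau> x)" using iter_shift[of s \<tau> n x] s by (simp add: y_def)
  qed
qed

end

fun Ck :: "nat \<Rightarrow> real set \<Rightarrow> (real \<Rightarrow> 'b::real_normed_vector) \<Rightarrow> bool" where
  "Ck 0 S f = True"
| "Ck (Suc n) S f = (\<exists>f'. (\<forall>t\<in>S. (f has_vector_derivative f' t) (at t)) \<and> Ck n S f')"

lemma Ck_mono: "Ck (Suc n) S f \<Longrightarrow> Ck n S f"
proof (induction n arbitrary: f)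
  case 0 then show ?case by simp
next
  case (Suc n)
  then obtain f' where "\<forall>t\<in>S. (f has_vector_derivative f' t) (at t)" "Ck (Suc n) S f'" by auto
  then show ?case using Suc.IH by auto
qed

lemma Ck_const: "Ck n S (\<lambda>t. c)"
proof (induction n arbitrary: c)
  case 0 then show ?case by simp
next
  case (Suc n) then show ?case by (auto intro!: exI[of _ "\<lambda>t. 0"])
qed

lemma Ck_add: "Ck n S f \<Longrightarrow> Ck n S g \<Longrightarrow> Ck n S (\<lambda>t. f t + g t)"
proof (induction n arbitrary: f g)
  case 0 then show ?case by simp
next
  case (Suc n)
  obtain f' where f: "\<forall>t\<in>S. (f has_vector_derivative f' t) (at t)" "Ck n S f'" using Suc.prems(1) by auto
  obtain g' where g: "\<forall>t\<in>S. (g has_vector_derivative g' t) (at t)" "Ck n S g'" using Suc.prems(2) by auto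
  show ?case using f g Suc.IH[OF f(2) g(2)]
    by (auto intro!: exI[of _ "\<lambda>t. f' t + g' t"] has_vector_derivative_add)
qed

lemma Ck_scaleR: "Ck n S f \<Longrightarrow> Ck n S (\<lambda>t. c *\<^sub>R f t)"
proof (induction n arbitrary: f)
  case 0 then show ?case by simp
next
  case (Suc n)
  obtain f' where f: "\<forall>t\<in>S. (f has_vector_derivative f' t) (at t)" "Ck n S f'" using Suc.prems(1) by auto
  have "((\<lambda>t. c *\<^sub>R f t) has_vector_derivative c *\<^sub>R f' t) (at t)" if "t \<in> S" for t
    using has_vector_derivative_scaleR[OF DERIV_const f(1)[rule_format, OF that], of c] by simp
  then show ?case using Suc.IH[OF f(2)] by (intro Ck.simps(2)[THEN iffD2] exI[of _ "\<lambda>t. c *\<^sub>R f' t"]) auto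
qed

lemma (in bounded_bilinear) Ck_prod:
  "Ck n S f \<Longrightarrow> Ck n S g \<Longrightarrow> Ck n S (\<lambda>t. prod (f t) (g t))"
proof (induction n arbitrary: f g)
  case 0 then show ?case by simp
next
  case (Suc n)
  obtain f' where f: "\<forall>t\<in>S. (f has_vector_derivative f' t) (at t)" "Ck n S f'" using Suc.prems(1) by auto
  obtain g' where g: "\<forall>t\<in>S. (g has_vector_derivative g' t) (at t)" "Ck n S g'" using Suc.prems(2) by auto
  have fn: "Ck n S f" and gn: "Ck n S g" using Suc.prems Ck_mono by blast+
  have d: "((\<lambda>t. prod (f t) (g t)) has_vector_derivative (prod (f t) (g' t) + prod (f' t) (g t))) (at t)" if "t \<in> S" for t
    using has_vector_derivative[OF f(1)[rule_format, OF that] g(1)[rule_format, OF that]] .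
  have "Ck n S (\<lambda>t. prod (f t) (g' t) + prod (f' t) (g t))"
    using Ck_add[OF Suc.IH[OF fn g(2)] Suc.IH[OF f(2) gn]] .
  then show ?case using d by (intro Ck.simps(2)[THEN iffD2] exI[of _ "\<lambda>t. prod (f t) (g' t) + prod (f' t) (g t)"]) auto
qed

lemma Ck_mult: "Ck n S f \<Longrightarrow> Ck n S g \<Longrightarrow> Ck n S (\<lambda>t. f t * (g t :: real))"
  using bounded_bilinear.Ck_prod[OF bounded_bilinear_mult] .

lemma Ck_inner: "Ck n S f \<Longrightarrow> Ck n S g \<Longrightarrow> Ck n S (\<lambda>t. inner (f t) (g t))"
  using bounded_bilinear.Ck_prod[OF bounded_bilinear_inner] .

lemma Ck_comp:
  fixes f g :: "real \<Rightarrow> real"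
  shows "Ck n T g \<Longrightarrow> Ck n S f \<Longrightarrow> (\<forall>t\<in>S. f t \<in> T) \<Longrightarrow> Ck n S (\<lambda>t. g (f t))"
proof (induction n arbitrary: f g)
  case 0 then show ?case by simp
next
  case (Suc n)
  obtain f' where f: "\<forall>t\<in>S. (f has_vector_derivative f' t) (at t)" "Ck n S f'" using Suc.prems(2) by auto
  obtain g' where g: "\<forall>t\<in>T. (g has_vector_derivative g' t) (at t)" "Ck n T g'" using Suc.prems(1) by auto
  have fn: "Ck n S f" using Suc.prems Ck_mono by blast
  have d: "((\<lambda>t. g (f t)) has_vector_derivative (g' (f t) * f' t)) (at t)" if "t \<in> S" for t
  proof -
    have "(g has_real_derivative g' (f t)) (at (f t))"
      using g(1) Suc.prems(3) that by (simp add: has_real_derivative_iff_has_vector_derivative)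
    moreover have "(f has_real_derivative f' t) (at t)"
      using f(1) that by (simp add: has_real_derivative_iff_has_vector_derivative)
    ultimately show ?thesis using DERIV_chain2 has_real_derivative_iff_has_vector_derivative by blast
  qed
  have "Ck n S (\<lambda>t. g' (f t) * f' t)"
    using Ck_mult[OF Suc.IH[OF g(2) fn Suc.prems(3)] f(2)] .
  then show ?case using d by (intro Ck.simps(2)[THEN iffD2] exI[of _ "\<lambda>t. g' (f t) * f' t"]) auto
qed

lemma Ck_inverse_sqrt: "Ck n {0<..} (inverse :: real \<Rightarrow> real) \<and> Ck n {0<..} sqrt"
proof (induction n)
  case 0 then show ?case by simp
next
  case (Suc n)
  have i: "Ck (Suc n) {0<..} (inverse :: real \<Rightarrow> real)"
  proof -
    have d: "(inverse has_vector_derivative (- 1) * (inverse t * inverse t)) (at t)" if "t \<in> {0<..}" for t :: real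
    proof -
      have "((\<lambda>x. inverse x) has_real_derivative - (inverse t ^ Suc (Suc 0))) (at t)"
        using that by (intro DERIV_inverse) auto
      then show ?thesis by (simp add: has_real_derivative_iff_has_vector_derivative[symmetric] power2_eq_square)
    qed
    have "Ck n {0<..} (\<lambda>t. (- 1) * (inverse t * inverse t))"
      using Ck_mult[OF Ck_const[of n "{0<..}" "-1::real"] Ck_mult[OF conjunct1[OF Suc.IH] conjunct1[OF Suc.IH]]] by simp
    then show ?thesis using d by (auto intro!: exI[of _ "\<lambda>t. (- 1) * (inverse t * inverse t)"])
  qed
  have s: "Ck (Suc n) {0<..} sqrt"
  proof -
    have d: "(sqrt has_vector_derivative (1/2) * inverse (sqrt t)) (at t)" if "t \<in> {0<..}" for t :: real
    proof -
      have "(sqrt has_real_derivative inverse (sqrt t) / 2) (at t)"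
        using that by (intro DERIV_real_sqrt) auto
      then show ?thesis by (simp add: has_real_derivative_iff_has_vector_derivative[symmetric])
    qed
    have "Ck n {0<..} (\<lambda>t. inverse (sqrt t))"
      using Ck_comp[OF conjunct1[OF Suc.IH] conjunct2[OF Suc.IH]] by simp
    then have "Ck n {0<..} (\<lambda>t. (1/2) * inverse (sqrt t))"
      using Ck_mult[OF Ck_const] by blast
    then show ?thesis using d by (auto intro!: exI[of _ "\<lambda>t. (1/2) * inverse (sqrt t)"])
  qed
  show ?case using i s by blast
qed

lemma Ck_cong: "open S \<Longrightarrow> (\<forall>t\<in>S. f t = g t) \<Longrightarrow> Ck n S f \<Longrightarrow> Ck n S g"
proof (induction n arbitrary: f g)
  case 0 then show ?case by simp
next
  case (Suc n)
  obtain f' where f: "\<forall>t\<in>S. (f has_vector_derivative f' t) (at t)" "Ck n S f'" using Suc.prems(3) by auto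
  have "(g has_vector_derivative f' t) (at t)" if "t \<in> S" for t
    using has_vector_derivative_transform_within_open[OF f(1)[rule_format, OF that] Suc.prems(1) that] Suc.prems(2)
    by auto
  then show ?case using f(2) by auto
qed

lemma Ck_deriv:
  fixes f :: "real \<Rightarrow> real"
  assumes S: "open S" and f: "Ck (Suc n) S f"
  shows "Ck n S (deriv f)" "\<forall>t\<in>S. (f has_real_derivative deriv f t) (at t)"
proof -
  obtain f' where f': "\<forall>t\<in>S. (f has_vector_derivative f' t) (at t)" "Ck n S f'" using f by auto
  have dr: "\<forall>t\<in>S. (f has_real_derivative f' t) (at t)"
    using f'(1) by (simp add: has_real_derivative_iff_has_vector_derivative)
  have eq: "\<forall>t\<in>S. f' t = deriv f t" using dr DERIV_imp_deriv by metis
  show "Ck n S (deriv f)" using Ck_cong[OF S eq f'(2)] .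
  show "\<forall>t\<in>S. (f has_real_derivative deriv f t) (at t)" using dr eq by metis
qed

lemma Ck_smooth:
  fixes h :: "real \<Rightarrow> real"
  assumes S: "open S" and h: "\<And>n. Ck n S h"
  shows "smooth_on S h"
proof -
  have all: "Ck n S ((deriv^^k) h)" for k n
  proof (induction k arbitrary: n)
    case 0 then show ?case using h by simp
  next
    case (Suc k)
    show ?case using Ck_deriv(1)[OF S Suc.IH[of "Suc n"]] by simp
  qed
  show ?thesis unfolding smooth_on_def
  proof (intro exI[of _ "\<lambda>n. (deriv^^n) h"] conjI allI ballI)
    show "(deriv^^0) h = h" by simp
    fix n t assume "t \<in> S"
    then show "((deriv^^n) h has_real_derivative (deriv^^Suc n) h t) (at t)"
      using Ck_deriv(2)[OF S all[of "Suc 0" n]] by simp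
  qed
qed

lemma Ck_seq:
  assumes "\<And>n t. t \<in> S \<Longrightarrow> (U n has_vector_derivative U (Suc n) t) (at t)"
  shows "Ck n S (U m)"
proof (induction n arbitrary: m)
  case 0 then show ?case by simp
next
  case (Suc n) then show ?case using assms by (auto intro!: exI[of _ "U (Suc m)"])
qed

lemma exp_strict: fixes x :: real assumes "x \<noteq> 0" shows "1 + x < exp x"
proof (cases "1 + x/2 < 0")
  case True
  then have "1 + x < 0" by linarith
  then show ?thesis using exp_gt_zero[of x] by linarith
next
  case False
  have "exp x = exp (x/2) * exp (x/2)" by (simp flip: exp_add)
  moreover have "(1 + x/2) * (1 + x/2) \<le> exp (x/2) * exp (x/2)"
    using False exp_ge_add_one_self[of "x/2"] by (intro mult_mono) auto
  moreover have "1 + x < (1 + x/2) * (1 + x/2)"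
    using assms by (simp add: algebra_simps) (metis not_real_square_gt_zero mult_pos_pos zero_less_divide_iff zero_less_numeral divide_self_if times_divide_times_eq)
  ultimately show ?thesis by linarith
qed

lemma exp_strict_convex:
  fixes a b \<theta> :: real
  assumes ab: "a \<noteq> b" and \<theta>: "0 < \<theta>" "\<theta> < 1"
  shows "exp (\<theta> * a + (1 - \<theta>) * b) < \<theta> * exp a + (1 - \<theta>) * exp b"
proof -
  define c where "c = \<theta> * a + (1 - \<theta>) * b"
  have "a - c = (1 - \<theta>) * (a - b)" by (simp add: c_def algebra_simps)
  then have ac: "a - c \<noteq> 0" using ab \<theta> by simp
  have "b - c = \<theta> * (b - a)" by (simp add: c_def algebra_simps)
  then have bc: "b - c \<noteq> 0" using ab \<theta> by simp
  have ea: "exp c * (1 + (a - c)) < exp a"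
  proof -
    have "exp a = exp c * exp (a - c)" by (simp flip: exp_add)
    then show ?thesis using exp_strict[OF ac] by simp
  qed
  have eb: "exp c * (1 + (b - c)) < exp b"
  proof -
    have "exp b = exp c * exp (b - c)" by (simp flip: exp_add)
    then show ?thesis using exp_strict[OF bc] by simp
  qed
  have "\<theta> * (exp c * (1 + (a - c))) + (1 - \<theta>) * (exp c * (1 + (b - c))) < \<theta> * exp a + (1 - \<theta>) * exp b"
    using ea eb \<theta> by (intro add_strict_mono mult_strict_left_mono) auto
  moreover have "\<theta> * (exp c * (1 + (a - c))) + (1 - \<theta>) * (exp c * (1 + (b - c))) = exp c"
    by (simp add: c_def algebra_simps)
  ultimately show ?thesis by (simp add: c_def)
qed

context hsg
begin

lemma orbit_cont: "continuous_on {0..} (\<lambda>t. T t y)"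
  unfolding continuous_on_eq_continuous_within
proof
  fix t :: real assume t: "t \<in> {0..}"
  show "continuous (at t within {0..}) (\<lambda>t. T t y)"
  proof (cases "t = 0")
    case True
    have "((\<lambda>t. T t y) \<longlongrightarrow> T 0 y) (at 0 within {0..})"
      using Tc0[of y] by (simp add: at_within_Ici_at_right)
    then show ?thesis using True by (simp add: continuous_within)
  next
    case False
    then have "0 < t" using t by simp
    then have "((\<lambda>s. T s y) has_derivative (\<lambda>h. h *\<^sub>R (- A (T t y)))) (at t)"
      using orbit_D(2) by (simp add: has_vector_derivative_def)
    then have "continuous (at t) (\<lambda>s. T s y)" by (rule has_derivative_continuous)
    then show ?thesis by (rule continuous_at_imp_continuous_within)
  qed
qed

lemma nonvanish:
  assumes u0: "u0 \<noteq> 0" and t: "0 \<le> t"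
  shows "T t u0 \<noteq> 0"
proof
  assume t0: "T t u0 = 0"
  have tpos: "0 < t"
  proof (rule ccontr)
    assume "\<not> 0 < t" then have "t = 0" using t by simp
    then show False using t0 u0 by simp
  qed
  obtain \<delta> S where d: "0 < \<delta>"
    and ST: "\<And>t. 0 < t \<Longrightarrow> S (complex_of_real t) = T t"
    and Sh: "\<And>x y. (\<lambda>z. cinner J (S z x) y) holomorphic_on sector \<delta>"
    using hol_data by metis
  define r where "r \<tau> = (SOME R. R > 0 \<and> R \<le> \<tau> \<and> ball (complex_of_real \<tau>) R \<subseteq> sector \<delta>)" for \<tau>
  have r: "r \<tau> > 0" "r \<tau> \<le> \<tau>" "ball (complex_of_real \<tau>) (r \<tau>) \<subseteq> sector \<delta>" if \<tau>0: "0 < \<tau>" for \<tau>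
  proof -
    obtain R where R: "R > 0" "ball (complex_of_real \<tau>) R \<subseteq> sector \<delta>" using sector_ball[OF d \<tau>0] by blast
    have "\<exists>R. R > 0 \<and> R \<le> \<tau> \<and> ball (complex_of_real \<tau>) R \<subseteq> sector \<delta>"
      using R \<tau>0 by (intro exI[of _ "min R \<tau>"]) auto
    then have "r \<tau> > 0 \<and> r \<tau> \<le> \<tau> \<and> ball (complex_of_real \<tau>) (r \<tau>) \<subseteq> sector \<delta>"
      unfolding r_def by (rule someI_ex)
    then show "r \<tau> > 0" "r \<tau> \<le> \<tau>" "ball (complex_of_real \<tau>) (r \<tau>) \<subseteq> sector \<delta>" by auto
  qed
  define V where "V = (\<Union>\<tau>\<in>{0<..}. ball (complex_of_real \<tau>) (r \<tau>))"
  have Vopen: "open V" unfolding V_def by auto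
  have Vsub: "V \<subseteq> sector \<delta>" unfolding V_def using r(3) by auto
  have realV: "complex_of_real \<tau> \<in> V" if "0 < \<tau>" for \<tau>
    unfolding V_def using r(1)[OF that] that by (intro UN_I[of \<tau>]) auto
  define P where "P = complex_of_real ` {0<..}"
  have Pcon: "connected P"
    unfolding P_def by (intro connected_continuous_image continuous_intros) auto
  have Vcon: "connected V"
  proof -
    have "V = \<Union>((\<lambda>\<tau>. ball (complex_of_real \<tau>) (r \<tau>) \<union> P) ` {0<..})"
      using realV unfolding V_def P_def by auto
    moreover have "connected (\<Union>((\<lambda>\<tau>. ball (complex_of_real \<tau>) (r \<tau>) \<union> P) ` {0<..}))"
    proof (rule connected_Union)
      fix s assume "s \<in> (\<lambda>\<tau>. ball (complex_of_real \<tau>) (r \<tau>) \<union> P) ` {0<..}"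
      then obtain \<tau> where \<tau>: "0 < \<tau>" "s = ball (complex_of_real \<tau>) (r \<tau>) \<union> P" by auto
      have "complex_of_real \<tau> \<in> ball (complex_of_real \<tau>) (r \<tau>) \<inter> P" using r(1)[OF \<tau>(1)] \<tau>(1) by (auto simp: P_def)
      then show "connected s" unfolding \<tau>(2) using Pcon by (intro connected_Un connected_ball) blast+
    next
      have "complex_of_real 1 \<in> \<Inter>((\<lambda>\<tau>. ball (complex_of_real \<tau>) (r \<tau>) \<union> P) ` {0<..})"
        by (auto simp: P_def)
      then show "\<Inter>((\<lambda>\<tau>. ball (complex_of_real \<tau>) (r \<tau>) \<union> P) ` {0<..}) \<noteq> {}" by blast
    qed
    ultimately show ?thesis by simp
  qed
  have zero: "cinner J (T \<tau> u0) y = 0" if \<tau>: "0 < \<tau>" for \<tau> y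
  proof -
    have holV: "(\<lambda>z. cinner J (S z u0) y) holomorphic_on V" using Sh Vsub holomorphic_on_subset by blast
    define U where "U = complex_of_real ` {t<..}"
    have UV: "U \<subseteq> V" unfolding U_def using realV tpos by auto
    have Uz: "cinner J (S z u0) y = 0" if zU: "z \<in> U" for z
    proof -
      obtain s where s: "t < s" "z = complex_of_real s" using zU by (auto simp: U_def)
      have "T s u0 = T (s - t) (T t u0)" using Tadd[of "s - t" t u0] s t by simp
      also have "\<dots> = 0" using t0 T_zero s by simp
      finally have "S z u0 = 0" using ST[of s] s tpos by simp
      then show ?thesis by (simp add: cinner_def complex_eq_iff)
    qed
    have xi: "complex_of_real (t+1) \<in> V" using realV[of "t+1"] tpos by linarith
    have lim: "complex_of_real (t+1) islimpt U"
      unfolding islimpt_approachable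
    proof (intro allI impI)
      fix e :: real assume e: "0 < e"
      have m: "complex_of_real (t + 1 + e/2) \<in> U" unfolding U_def using e by (intro imageI) auto
      have "complex_of_real (t + 1 + e/2) \<noteq> complex_of_real (t+1)" using e by simp
      moreover have "dist (complex_of_real (t + 1 + e/2)) (complex_of_real (t+1)) < e"
        using e by (simp add: dist_norm flip: of_real_diff)
      ultimately show "\<exists>x'\<in>U. x' \<noteq> complex_of_real (t+1) \<and> dist x' (complex_of_real (t+1)) < e"
        using m by blast
    qed
    have "cinner J (S (complex_of_real \<tau>) u0) y = 0"
      by (rule analytic_continuation[OF holV Vopen Vcon UV xi lim Uz realV[OF \<tau>]])
    then show ?thesis using ST[OF \<tau>] by simp
  qed
  have allz: "T \<tau> u0 = 0" if "0 < \<tau>" for \<tau>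
  proof -
    have "inner (T \<tau> u0) (T \<tau> u0) = 0" using arg_cong[OF zero[OF that, of "T \<tau> u0"], of Re] by simp
    then show ?thesis by simp
  qed
  have ev: "eventually (\<lambda>\<tau>. (0::'a) = T \<tau> u0) (at_right 0)"
    using ev_pos by eventually_elim (simp add: allz)
  have "((\<lambda>\<tau>. T \<tau> u0) \<longlongrightarrow> 0) (at_right 0)"
    using Lim_transform_eventually[OF tendsto_const ev] .
  then have "u0 = 0" using tendsto_unique[OF trivial_limit_at_right_real Tc0] by blast
  then show False using u0 by simp
qed

end

lemma mvt_get:
  fixes g g' :: "real \<Rightarrow> real"
  assumes ab: "a < b" and a0: "0 \<le> a" and cont: "continuous_on {0..} g"
    and der: "\<And>x. 0 < x \<Longrightarrow> (g has_real_derivative g' x) (at x)"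
  shows "\<exists>\<xi>. a < \<xi> \<and> \<xi> < b \<and> g b - g a = (b - a) * g' \<xi>"
proof -
  have c: "continuous_on {a..b} g" using cont a0 continuous_on_subset by fastforce
  have "\<exists>l z. a < z \<and> z < b \<and> DERIV g z :> l \<and> g b - g a = (b - a) * l"
  proof (rule MVT[OF ab c])
    fix x assume x: "a < x" "x < b"
    then have "0 < x" using a0 by simp
    then show "g differentiable (at x)" using der real_differentiable_def by blast
  qed
  then obtain l z where z: "a < z" "z < b" "DERIV g z :> l" "g b - g a = (b - a) * l" by blast
  have "l = g' z" using DERIV_unique[OF z(3) der[of z]] z a0 by simp
  then show ?thesis using z by blast
qed

lemma convex_on_Ici:
  fixes g g' :: "real \<Rightarrow> real"
  assumes cont: "continuous_on {0..} g"
    and der: "\<And>x. 0 < x \<Longrightarrow> (g has_real_derivative g' x) (at x)"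
    and mono: "\<And>x y. 0 < x \<Longrightarrow> x \<le> y \<Longrightarrow> g' x \<le> g' y"
  shows "convex_on {0..} g"
proof (rule convex_on_linorderI)
  show "convex {0::real..}" by (rule convex_real_interval)
next
  fix t x y :: real
  assume t: "t > 0" "t < 1"
  assume xy: "x \<in> {0..}" "y \<in> {0..}" "x < y"
  define z where "z = (1 - t) * x + t * y"
  from xy t have xz: "z > x" by (simp add: z_def algebra_simps)
  have "y - z = (1 - t) * (y - x)" by (simp add: z_def algebra_simps)
  also from xy t have "\<dots> > 0" by (intro mult_pos_pos) simp_all
  finally have yz: "z < y" by simp
  obtain \<xi> where \<xi>: "x < \<xi>" "\<xi> < z" "g z - g x = (z - x) * g' \<xi>"
    using mvt_get[OF xz _ cont der] xy by auto
  obtain \<eta> where \<eta>: "z < \<eta>" "\<eta> < y" "g y - g z = (y - z) * g' \<eta>"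
    using mvt_get[OF yz _ cont der] xy xz by auto
  have "g' \<xi> \<le> g' \<eta>" using mono[of \<xi> \<eta>] \<xi> \<eta> xy by auto
  then have "(g y - g z) * (z - x) \<ge> (g z - g x) * (y - z)"
    using \<xi>(3) \<eta>(3) xz yz by (simp add: mult_left_mono mult.commute mult.left_commute)
  also have "z - x = t * (y - x)" by (simp add: z_def algebra_simps)
  also have "y - z = (1 - t) * (y - x)" by (simp add: z_def algebra_simps)
  finally have "(g y - g z) * t \<ge> (g z - g x) * (1 - t)" using xy by simp
  then show "(1 - t) * g x + t * g y \<ge> g ((1 - t) *\<^sub>R x + t *\<^sub>R y)"
    by (simp add: z_def algebra_simps)
qed

lemma mono_at_right_Inf:
  fixes q :: "real \<Rightarrow> real"
  assumes mono: "\<And>s t. 0 < s \<Longrightarrow> s \<le> t \<Longrightarrow> q s \<le> q t"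
  shows "((\<lambda>t. ereal (q t)) \<longlongrightarrow> (INF t\<in>{0<..}. ereal (q t))) (at_right 0)"
proof (rule order_tendstoI)
  fix a assume a: "a < (INF t\<in>{0<..}. ereal (q t))"
  show "eventually (\<lambda>t. a < ereal (q t)) (at_right 0)"
    using eventually_at_right_less[of "0::real"]
  proof eventually_elim
    case (elim t)
    have "(INF t\<in>{0<..}. ereal (q t)) \<le> ereal (q t)" using elim by (intro INF_lower) auto
    then show ?case using a by simp
  qed
next
  fix a assume a: "(INF t\<in>{0<..}. ereal (q t)) < a"
  then obtain t0 where t0: "t0 > 0" "ereal (q t0) < a" by (auto simp: INF_less_iff)
  show "eventually (\<lambda>t. ereal (q t) < a) (at_right 0)"
  proof (rule eventually_at_rightI[of 0 t0])
    show "0 < t0" by fact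
    fix t :: real assume "t \<in> {0<..<t0}"
    then have "q t \<le> q t0" using mono by simp
    then show "ereal (q t) < a" using t0 by (meson ereal_less_eq(3) le_less_trans)
  qed
qed

lemma mvt_pos:
  fixes g g' :: "real \<Rightarrow> real"
  assumes ab: "a < b" and a0: "0 < a"
    and der: "\<And>x. 0 < x \<Longrightarrow> (g has_real_derivative g' x) (at x)"
  shows "\<exists>\<xi>. a < \<xi> \<and> \<xi> < b \<and> g b - g a = (b - a) * g' \<xi>"
proof -
  have c: "continuous_on {a..b} g"
    using a0 by (intro continuous_at_imp_continuous_on ballI DERIV_continuous[OF der]) auto
  have "\<exists>l z. a < z \<and> z < b \<and> DERIV g z :> l \<and> g b - g a = (b - a) * l"
  proof (rule MVT[OF ab c])
    fix x assume x: "a < x" "x < b"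
    then have "0 < x" using a0 by simp
    then show "g differentiable (at x)" using der real_differentiable_def by blast
  qed
  then obtain l z where z: "a < z" "z < b" "DERIV g z :> l" "g b - g a = (b - a) * l" by blast
  have "l = g' z" using DERIV_unique[OF z(3) der[of z]] z a0 by simp
  then show ?thesis using z by blast
qed

locale orb = hsg J T D A
  for J :: "'a::{real_inner,complete_space} \<Rightarrow> 'a" and T D A +
  fixes u0 :: 'a assumes u0: "u0 \<noteq> 0"
begin

definition "ff t = inner (T t u0) (T t u0)"
definition "f1 t = -2 * inner (A (T t u0)) (T t u0)"
definition "f2 t = 2 * (inner (A (A (T t u0))) (T t u0) + inner (A (T t u0)) (A (T t u0)))"
definition "hh t = norm (T t u0)"
definition "gg t = ln (ff t)"

lemma nz: "0 \<le> t \<Longrightarrow> T t u0 \<noteq> 0"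
  using nonvanish[OF u0] by blast

lemma ff_pos: "0 \<le> t \<Longrightarrow> 0 < ff t"
  using nz by (simp add: ff_def)

lemma hh_sqrt: "hh t = sqrt (ff t)"
  by (simp add: hh_def ff_def norm_eq_sqrt_inner)

lemma hh_pos: "0 \<le> t \<Longrightarrow> 0 < hh t"
  using nz by (simp add: hh_def)

lemma u_deriv: "0 < t \<Longrightarrow> ((\<lambda>\<tau>. T \<tau> u0) has_vector_derivative - A (T t u0)) (at t)"
  using orbit_D(2) by blast

lemma Au_deriv: "0 < t \<Longrightarrow> ((\<lambda>\<tau>. A (T \<tau> u0)) has_vector_derivative - A (A (T t u0))) (at t)"
  using iter_deriv[of t 1 u0] by (simp add: numeral_2_eq_2)

lemma uD: "0 < t \<Longrightarrow> T t u0 \<in> D"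
  using orbit_D(1) by blast

lemma AuD: "0 < t \<Longrightarrow> A (T t u0) \<in> D"
  using iter_D[of t 1 u0] by simp

lemma ff_deriv: "0 < t \<Longrightarrow> (ff has_real_derivative f1 t) (at t)"
proof -
  assume t: "0 < t"
  have "((\<lambda>\<tau>. inner (T \<tau> u0) (T \<tau> u0)) has_vector_derivative
      (inner (T t u0) (- A (T t u0)) + inner (- A (T t u0)) (T t u0))) (at t)"
    using bounded_bilinear.has_vector_derivative[OF bounded_bilinear_inner u_deriv[OF t] u_deriv[OF t]] .
  then show ?thesis
    unfolding has_real_derivative_iff_has_vector_derivative ff_def[abs_def] f1_def
    by (simp add: inner_commute)
qed

lemma f1_deriv: "0 < t \<Longrightarrow> (f1 has_real_derivative f2 t) (at t)"
proof -
  assume t: "0 < t"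
  have "((\<lambda>\<tau>. inner (A (T \<tau> u0)) (T \<tau> u0)) has_vector_derivative
      (inner (A (T t u0)) (- A (T t u0)) + inner (- A (A (T t u0))) (T t u0))) (at t)"
    using bounded_bilinear.has_vector_derivative[OF bounded_bilinear_inner Au_deriv[OF t] u_deriv[OF t]] .
  then have "((\<lambda>\<tau>. inner (A (T \<tau> u0)) (T \<tau> u0)) has_real_derivative
      (inner (A (T t u0)) (- A (T t u0)) + inner (- A (A (T t u0))) (T t u0))) (at t)"
    by (simp add: has_real_derivative_iff_has_vector_derivative)
  then have "((\<lambda>\<tau>. -2 * inner (A (T \<tau> u0)) (T \<tau> u0)) has_real_derivative
      -2 * (inner (A (T t u0)) (- A (T t u0)) + inner (- A (A (T t u0))) (T t u0))) (at t)"
    by (rule DERIV_cmult)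
  then show ?thesis unfolding f1_def[abs_def] f2_def by (simp add: algebra_simps)
qed

lemma f1_neg: "0 < t \<Longrightarrow> f1 t < 0"
  using acc_pos[OF uD nz] by (simp add: f1_def)

lemma key: "0 < t \<Longrightarrow> f1 t * f1 t \<le> ff t * f2 t"
proof -
  assume t: "0 < t"
  have "2 * (inner (A (T t u0)) (T t u0))^2 \<le> (inner (A (A (T t u0))) (T t u0) + (norm (A (T t u0)))^2) * (norm (T t u0))^2"
    using part_a_hom[OF J hyp uD[OF t] AuD[OF t]] .
  then have "2 * (inner (A (T t u0)) (T t u0))^2 \<le> (inner (A (A (T t u0))) (T t u0) + inner (A (T t u0)) (A (T t u0))) * inner (T t u0) (T t u0)"
    by (simp only: power2_norm_eq_inner)
  then show ?thesis
    by (simp add: f1_def f2_def ff_def power2_norm_eq_inner power2_eq_square algebra_simps)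
qed

lemma ff_cont: "continuous_on {0..} ff"
  unfolding ff_def[abs_def] using orbit_cont[of u0] by (intro continuous_intros) auto

lemma hh_cont: "continuous_on {0..} hh"
  unfolding hh_def[abs_def] using orbit_cont[of u0] by (intro continuous_intros) auto

lemma gg_deriv: "0 < t \<Longrightarrow> (gg has_real_derivative f1 t / ff t) (at t)"
  unfolding gg_def[abs_def] using DERIV_chain2[OF DERIV_ln_divide[OF ff_pos] ff_deriv, of t]
  by (simp add: field_simps)

lemma g1_mono: "0 < x \<Longrightarrow> x \<le> y \<Longrightarrow> f1 x / ff x \<le> f1 y / ff y"
proof -
  assume xy: "0 < x" "x \<le> y"
  have der: "((\<lambda>t. f1 t / ff t) has_real_derivative (f2 t * ff t - f1 t * f1 t) / (ff t * ff t)) (at t)"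
    if "0 < t" for t
    using DERIV_divide[OF f1_deriv[OF that] ff_deriv[OF that]] ff_pos[of t] that by simp
  show ?thesis
  proof (cases "x = y")
    case True then show ?thesis by simp
  next
    case False
    then have "x < y" using xy by simp
    from mvt_pos[OF this xy(1) der] obtain \<xi> where \<xi>: "x < \<xi>" "\<xi> < y"
      "f1 y / ff y - f1 x / ff x = (y - x) * ((f2 \<xi> * ff \<xi> - f1 \<xi> * f1 \<xi>) / (ff \<xi> * ff \<xi>))"
      by blast
    have "0 \<le> (f2 \<xi> * ff \<xi> - f1 \<xi> * f1 \<xi>) / (ff \<xi> * ff \<xi>)"
      using key[of \<xi>] \<xi> xy by (simp add: mult.commute)
    moreover have "0 \<le> y - x" using \<open>x < y\<close> by simp
    ultimately have "0 \<le> (y - x) * ((f2 \<xi> * ff \<xi> - f1 \<xi> * f1 \<xi>) / (ff \<xi> * ff \<xi>))"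
      by (simp only: mult_nonneg_nonneg)
    then show ?thesis using \<xi>(3) by linarith
  qed
qed

lemma gg_convex: "convex_on {0..} gg"
proof (rule convex_on_Ici[OF _ gg_deriv g1_mono])
  show "continuous_on {0..} gg"
  proof -
    have "\<forall>x\<in>{0..}. ff x \<noteq> 0" using ff_pos by (metis atLeast_iff less_irrefl)
    then show ?thesis unfolding gg_def[abs_def] using ff_cont by (intro continuous_on_ln) auto
  qed
qed auto

end

context orb
begin

lemma ln_hh: "0 \<le> t \<Longrightarrow> ln (hh t) = gg t / 2"
  using ff_pos[of t] by (simp add: hh_sqrt gg_def ln_sqrt)

lemma exp_ln_hh: "0 \<le> t \<Longrightarrow> exp (gg t / 2) = hh t"
proof -
  assume t: "0 \<le> t"
  have "exp (ln (hh t)) = hh t" using hh_pos[OF t] by simp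
  then show ?thesis using ln_hh[OF t] by simp
qed

lemma part_b:
  assumes r: "0 \<le> r" "r < s" "s < t"
  shows "hh s \<le> hh r powr ((t - s) / (t - r)) * hh t powr ((s - r) / (t - r))"
proof -
  define b where "b = (s - r) / (t - r)"
  have b: "0 \<le> b" "b \<le> 1" using r by (auto simp: b_def field_simps)
  have a: "(t - s) / (t - r) = 1 - b" using r by (simp add: b_def field_simps)
  have bt: "b * (t - r) = s - r" using r by (simp add: b_def)
  have sb: "(1 - b) *\<^sub>R r + b *\<^sub>R t = s" using bt by (simp add: algebra_simps)
  have "gg s \<le> (1 - b) * gg r + b * gg t"
    using convex_onD[OF gg_convex b, of r t] r sb by simp
  then have "exp (gg s / 2) \<le> exp ((1 - b) * (gg r / 2) + b * (gg t / 2))"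
    by (simp add: field_simps)
  also have "\<dots> = exp ((1 - b) * ln (hh r)) * exp (b * ln (hh t))"
    using r by (simp add: ln_hh exp_add)
  also have "\<dots> = hh r powr (1 - b) * hh t powr b"
    using hh_pos[of r] hh_pos[of t] r by (simp add: powr_def)
  finally show ?thesis using exp_ln_hh[of s] r a by (simp add: b_def)
qed

lemma ff_strict: "0 \<le> s \<Longrightarrow> s < t \<Longrightarrow> ff t < ff s"
proof -
  assume st: "0 \<le> s" "s < t"
  obtain \<xi> where \<xi>: "s < \<xi>" "\<xi> < t" "ff t - ff s = (t - s) * f1 \<xi>"
    using mvt_get[OF st(2) st(1) ff_cont ff_deriv] by blast
  have "f1 \<xi> < 0" using f1_neg \<xi> st by simp
  then have "(t - s) * f1 \<xi> < 0" using st by (simp add: mult_pos_neg)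
  then show ?thesis using \<xi>(3) by simp
qed

lemma hh_strict: "0 \<le> s \<Longrightarrow> s < t \<Longrightarrow> hh t < hh s"
  using ff_strict by (simp add: hh_sqrt)

lemma hh_strict_anti: "strict_antimono_on {0..} hh"
  unfolding monotone_on_def using hh_strict by auto

lemma hh_strictly_convex: "strictly_convex_on {0..} hh"
  unfolding strictly_convex_on_def
proof (intro ballI impI allI)
  fix x y \<theta> :: real
  assume x: "x \<in> {0..}" and y: "y \<in> {0..}" and xy: "x \<noteq> y" and \<theta>: "0 < \<theta> \<and> \<theta> < 1"
  have z0: "0 \<le> \<theta> * x + (1 - \<theta>) * y" using x y \<theta> by simp
  have "gg (\<theta> * x + (1 - \<theta>) * y) \<le> \<theta> * gg x + (1 - \<theta>) * gg y"
    using convex_onD[OF gg_convex, of "1 - \<theta>" x y] x y \<theta> by (simp add: algebra_simps)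
  then have "gg (\<theta> * x + (1 - \<theta>) * y) / 2 \<le> \<theta> * (gg x / 2) + (1 - \<theta>) * (gg y / 2)"
    by simp
  then have "exp (gg (\<theta> * x + (1 - \<theta>) * y) / 2) \<le> exp (\<theta> * (gg x / 2) + (1 - \<theta>) * (gg y / 2))"
    by (simp only: exp_le_cancel_iff)
  then have "hh (\<theta> * x + (1 - \<theta>) * y) \<le> exp (\<theta> * (gg x / 2) + (1 - \<theta>) * (gg y / 2))"
    using exp_ln_hh[OF z0] by simp
  also have "\<dots> < \<theta> * exp (gg x / 2) + (1 - \<theta>) * exp (gg y / 2)"
  proof (rule exp_strict_convex)
    show "gg x / 2 \<noteq> gg y / 2"
    proof
      assume "gg x / 2 = gg y / 2"
      then have "hh x = hh y" using exp_ln_hh[of x] exp_ln_hh[of y] x y by simp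
      moreover have "hh x \<noteq> hh y"
        using xy hh_strict[of x y] hh_strict[of y x] x y by (cases "x < y") auto
      ultimately show False by simp
    qed
  qed (use \<theta> in auto)
  also have "\<dots> = \<theta> * hh x + (1 - \<theta>) * hh y" using x y exp_ln_hh by simp
  finally show "hh (\<theta> * x + (1 - \<theta>) * y) < \<theta> * hh x + (1 - \<theta>) * hh y" .
qed

lemma hh_sc: "x \<in> {0..} \<Longrightarrow> y \<in> {0..} \<Longrightarrow> x \<noteq> y \<Longrightarrow> 0 < u \<Longrightarrow> u < 1 \<Longrightarrow>
  hh (u * x + (1 - u) * y) < u * hh x + (1 - u) * hh y"
  using hh_strictly_convex unfolding strictly_convex_on_def by blast

lemma hh_convex: "convex_on {0..} hh"
proof (rule convex_on_linorderI)
  show "convex {0::real..}" by (rule convex_real_interval)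
  fix t x y :: real assume t: "0 < t" "t < 1" and xy: "x \<in> {0..}" "y \<in> {0..}" "x < y"
  have "hh ((1 - t) * x + (1 - (1 - t)) * y) < (1 - t) * hh x + (1 - (1 - t)) * hh y"
    using hh_sc[of x y "1 - t"] xy t by simp
  then show "hh ((1 - t) *\<^sub>R x + t *\<^sub>R y) \<le> (1 - t) * hh x + t * hh y" by simp
qed

definition "h1 t = f1 t / (2 * hh t)"

lemma hh_deriv: "0 < t \<Longrightarrow> (hh has_real_derivative h1 t) (at t)"
proof -
  assume t: "0 < t"
  have "((\<lambda>x. sqrt (ff x)) has_real_derivative inverse (sqrt (ff t)) / 2 * f1 t) (at t)"
    using DERIV_chain2[OF DERIV_real_sqrt[OF ff_pos] ff_deriv[OF t]] t by simp
  moreover have "(\<lambda>x. sqrt (ff x)) = hh" by (simp add: fun_eq_iff hh_sqrt)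
  ultimately show ?thesis by (simp add: h1_def hh_sqrt field_simps)
qed

lemma deriv_hh: "0 < t \<Longrightarrow> deriv hh t = h1 t"
  using hh_deriv DERIV_imp_deriv by blast

definition "qq t = (hh t - hh 0) / t"

lemma qq_mono: "0 < s \<Longrightarrow> s \<le> t \<Longrightarrow> qq s \<le> qq t"
proof (cases "s = t")
  case True then show ?thesis by simp
next
  case False
  assume st: "0 < s" "s \<le> t"
  then have st': "s < t" using False by simp
  have "hh ((s/t) * t + (1 - s/t) * 0) < (s/t) * hh t + (1 - s/t) * hh 0"
    using hh_sc[of t 0 "s/t"] st st' by simp
  then have "hh s - hh 0 < (s/t) * (hh t - hh 0)" using st st' by (simp add: algebra_simps)
  then have "(hh s - hh 0) / s < (hh t - hh 0) / t" using st st' by (simp add: field_simps)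
  then show ?thesis by (simp add: qq_def)
qed

definition "dd = (INF t\<in>{0<..}. ereal (qq t))"

lemma dd_lim: "((\<lambda>t. ereal ((hh t - hh 0) / t)) \<longlongrightarrow> dd) (at_right 0)"
  using mono_at_right_Inf[OF qq_mono] unfolding dd_def qq_def by simp

lemma dd_le0: "dd \<le> 0"
proof -
  have "dd \<le> ereal (qq 1)" unfolding dd_def by (intro INF_lower) auto
  also have "qq 1 \<le> 0" using hh_strict[of 0 1] by (simp add: qq_def)
  finally show ?thesis by (simp add: zero_ereal_def)
qed

lemma qq_le_h1: "0 < t \<Longrightarrow> qq t \<le> h1 t"
proof -
  assume t: "0 < t"
  have "hh 0 - hh t \<ge> h1 t * (0 - t)"
    by (rule convex_on_imp_above_tangent[OF hh_convex]) (use t hh_deriv[OF t] in \<open>auto intro: has_field_derivative_at_within\<close>)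
  then show ?thesis using t by (simp add: qq_def field_simps)
qed

lemma dd_INF: "dd = (INF t\<in>{0<..}. ereal (deriv hh t))"
proof (rule antisym)
  show "dd \<le> (INF t\<in>{0<..}. ereal (deriv hh t))"
  proof (rule INF_greatest)
    fix t :: real assume t: "t \<in> {0<..}"
    have "dd \<le> ereal (qq t)" unfolding dd_def using t by (intro INF_lower)
    also have "\<dots> \<le> ereal (deriv hh t)" using qq_le_h1 deriv_hh t by simp
    finally show "dd \<le> ereal (deriv hh t)" .
  qed
  show "(INF t\<in>{0<..}. ereal (deriv hh t)) \<le> dd"
    unfolding dd_def
  proof (rule INF_greatest)
    fix t :: real assume t: "t \<in> {0<..}"
    obtain \<xi> where \<xi>: "0 < \<xi>" "\<xi> < t" "hh t - hh 0 = (t - 0) * h1 \<xi>"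
      using mvt_get[of 0 t hh h1] t hh_cont hh_deriv by auto
    have "(INF t\<in>{0<..}. ereal (deriv hh t)) \<le> ereal (deriv hh \<xi>)" using \<xi> by (intro INF_lower) auto
    also have "deriv hh \<xi> = qq t" using \<xi> t deriv_hh by (simp add: qq_def)
    finally show "(INF t\<in>{0<..}. ereal (deriv hh t)) \<le> ereal (qq t)" .
  qed
qed

lemma hh_lim0: "(hh \<longlongrightarrow> hh 0) (at_right 0)"
proof -
  have "(hh \<longlongrightarrow> hh 0) (at 0 within {0..})" using hh_cont unfolding continuous_on_def by simp
  then show ?thesis by (simp add: at_within_Ici_at_right)
qed

lemma h1_le_m: "0 < t \<Longrightarrow> h1 t \<le> - hh t * m_num J D A"
proof -
  assume t: "0 < t"
  define x where "x = T t u0"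
  have x: "x \<in> D" "x \<noteq> 0" using uD nz t by (auto simp: x_def)
  define v where "v = (1 / norm x) *\<^sub>R x"
  have vD: "v \<in> D" using D_scaleR(1)[OF x(1)] by (simp add: v_def)
  have nv: "norm v = 1" using x by (simp add: v_def)
  have "m_num J D A \<le> inner (A v) v" by (rule m_le[OF vD nv])
  also have "inner (A v) v = inner (A x) x / (norm x)^2"
    using D_scaleR(2)[OF x(1)] by (simp add: v_def power2_eq_square)
  finally have "norm x * m_num J D A \<le> inner (A x) x / norm x"
    using x by (simp add: field_simps power2_eq_square)
  moreover have "h1 t = - (inner (A x) x / norm x)"
    using x by (simp add: h1_def f1_def hh_def x_def)
  ultimately show ?thesis by (simp add: hh_def x_def)
qed

lemma dd_le_m: "norm u0 = 1 \<Longrightarrow> dd \<le> ereal (- m_num J D A)"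
proof -
  assume n: "norm u0 = 1"
  have lim: "((\<lambda>t. ereal (- hh t * m_num J D A)) \<longlongrightarrow> ereal (- m_num J D A)) (at_right 0)"
  proof -
    have "((\<lambda>t. - hh t * m_num J D A) \<longlongrightarrow> - hh 0 * m_num J D A) (at_right 0)"
      by (intro tendsto_intros hh_lim0)
    then show ?thesis using n by (intro tendsto_ereal) (simp add: hh_def)
  qed
  have ev: "eventually (\<lambda>t. dd \<le> ereal (- hh t * m_num J D A)) (at_right 0)"
    using ev_pos
  proof eventually_elim
    case (elim t)
    have "dd \<le> ereal (deriv hh t)" unfolding dd_INF using elim by (intro INF_lower) auto
    also have "\<dots> \<le> ereal (- hh t * m_num J D A)" using deriv_hh h1_le_m elim by simp
    finally show ?case .
  qed
  show ?thesis by (rule tendsto_le[OF trivial_limit_at_right_real lim tendsto_const ev])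
qed

end

context orb
begin

lemma qq_lim_D:
  assumes D0: "u0 \<in> D" and n: "norm u0 = 1"
  shows "((\<lambda>t. (hh t - hh 0) / t) \<longlongrightarrow> - inner (A u0) u0) (at_right 0)"
proof -
  have l1: "((\<lambda>t. inner ((T t u0 - u0) /\<^sub>R t) (T t u0 + u0)) \<longlongrightarrow> inner (- A u0) (u0 + u0)) (at_right 0)"
    by (intro tendsto_intros gen_lim[OF D0] Tc0)
  have l2: "((\<lambda>t. hh t + hh 0) \<longlongrightarrow> hh 0 + hh 0) (at_right 0)"
    by (intro tendsto_intros hh_lim0)
  have h0: "hh 0 = 1" using n by (simp add: hh_def)
  have l3: "((\<lambda>t. inner ((T t u0 - u0) /\<^sub>R t) (T t u0 + u0) / (hh t + hh 0)) \<longlongrightarrow> inner (- A u0) (u0 + u0) / (hh 0 + hh 0)) (at_right 0)"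
    using h0 by (intro tendsto_divide l1 l2) simp
  have ev: "eventually (\<lambda>t. inner ((T t u0 - u0) /\<^sub>R t) (T t u0 + u0) / (hh t + hh 0) = (hh t - hh 0) / t) (at_right 0)"
    using ev_pos
  proof eventually_elim
    case (elim t)
    have p: "0 < hh t + hh 0" using hh_pos[of t] hh_pos[of 0] elim by simp
    have nn: "inner v v = norm v * norm v" for v :: 'a
      by (simp only: dot_square_norm power2_eq_square)
    have "inner (T t u0 - u0) (T t u0 + u0) = inner (T t u0) (T t u0) - inner u0 u0"
      unfolding inner_diff_left inner_add_right using inner_commute[of "T t u0" u0] by simp
    also have "\<dots> = hh t * hh t - hh 0 * hh 0" by (simp only: nn hh_def T0)
    also have "\<dots> = (hh t - hh 0) * (hh t + hh 0)" by (simp add: algebra_simps)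
    finally have "inner ((T t u0 - u0) /\<^sub>R t) (T t u0 + u0) = (hh t - hh 0) * (hh t + hh 0) / t"
      by (simp add: divide_inverse mult.commute)
    then show ?case using p elim by (simp add: field_simps)
  qed
  have "inner (- A u0) (u0 + u0) / (hh 0 + hh 0) = - inner (A u0) u0"
    using h0 by (simp add: inner_add_right)
  then show ?thesis using Lim_transform_eventually[OF l3 ev] by simp
qed

lemma dd_D: "u0 \<in> D \<Longrightarrow> norm u0 = 1 \<Longrightarrow> dd = ereal (- inner (A u0) u0)"
  using tendsto_unique[OF trivial_limit_at_right_real dd_lim tendsto_ereal[OF qq_lim_D]] by simp

lemma C1_D:
  assumes D0: "u0 \<in> D" and n: "norm u0 = 1"
  shows "C1_on_closed_halfline hh"
  unfolding C1_on_closed_halfline_def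
proof (intro exI[of _ "\<lambda>t. - inner (A (T t u0)) (T t u0) / norm (T t u0)"] conjI allI impI)
  fix t :: real assume t: "0 \<le> t"
  show "(hh has_real_derivative - inner (A (T t u0)) (T t u0) / norm (T t u0)) (at t within {0..})"
  proof (cases "t = 0")
    case True
    have "((\<lambda>y. (hh y - hh 0) / (y - 0)) \<longlongrightarrow> - inner (A u0) u0) (at 0 within {0..})"
      using qq_lim_D[OF D0 n] by (simp add: at_within_Ici_at_right)
    then show ?thesis using True n by (simp add: has_field_derivative_iff)
  next
    case False
    then have t0: "0 < t" using t by simp
    have "h1 t = - inner (A (T t u0)) (T t u0) / norm (T t u0)"
      using nz[of t] t by (simp add: h1_def f1_def hh_def field_simps)
    then show ?thesis using hh_deriv[OF t0] by (auto intro: has_field_derivative_at_within)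
  qed
next
  have eq: "\<forall>t\<in>{0..}. - inner (T t (A u0)) (T t u0) / norm (T t u0) = - inner (A (T t u0)) (T t u0) / norm (T t u0)"
    using commute(2)[OF D0] by simp
  have "continuous_on {0..} (\<lambda>t. - inner (T t (A u0)) (T t u0) / norm (T t u0))"
    using orbit_cont[of "A u0"] orbit_cont[of u0] nz by (intro continuous_intros) auto
  then show "continuous_on {0..} (\<lambda>t. - inner (A (T t u0)) (T t u0) / norm (T t u0))"
    using continuous_on_cong[OF refl, of "{0..}" "\<lambda>t. - inner (T t (A u0)) (T t u0) / norm (T t u0)"] eq by auto
qed

lemma smooth_hh: "smooth_on {0<..} hh"
proof (rule Ck_smooth)
  show "open {0::real<..}" by simp
  fix n
  define U where "U k \<tau> = ((-1::real)^k) *\<^sub>R (A^^k) (T \<tau> u0)" for k \<tau>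
  have dU: "(U k has_vector_derivative U (Suc k) t) (at t)" if "t \<in> {0<..}" for k t
  proof -
    have "((\<lambda>\<tau>. ((-1::real)^k) *\<^sub>R (A^^k) (T \<tau> u0)) has_vector_derivative ((-1::real)^k) *\<^sub>R (- (A^^Suc k) (T t u0))) (at t)"
      using has_vector_derivative_scaleR[OF DERIV_const iter_deriv[of t k u0], of "(-1::real)^k"] that by simp
    then show ?thesis unfolding U_def[abs_def] by simp
  qed
  have cu: "Ck n {0<..} (U 0)" by (rule Ck_seq[where U=U and S="{0<..}", OF dU])
  have "(U 0) = (\<lambda>\<tau>. T \<tau> u0)" by (simp add: U_def fun_eq_iff)
  then have cu': "Ck n {0<..} (\<lambda>\<tau>. T \<tau> u0)" using cu by simp
  have cf: "Ck n {0<..} ff" using Ck_inner[OF cu' cu'] by (simp add: ff_def[abs_def])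
  have "Ck n {0<..} (\<lambda>t. sqrt (ff t))"
    using Ck_comp[OF conjunct2[OF Ck_inverse_sqrt[of n]] cf] ff_pos by simp
  moreover have "(\<lambda>t. sqrt (ff t)) = hh" by (simp add: fun_eq_iff hh_sqrt)
  ultimately show "Ck n {0<..} hh" by simp
qed

end

theorem corollary2p6:
  fixes J :: "'a::{real_inner, complete_space} \<Rightarrow> 'a"
    and T :: "real \<Rightarrow> 'a \<Rightarrow> 'a"
    and D :: "'a set"
    and A :: "'a \<Rightarrow> 'a"
  assumes J: "complex_structure J"
    and hol: "holomorphic_semigroup J T"
    and gen: "is_generator T D (\<lambda>x. - A x)"
    and acc: "pos_accretive J D A"
    and hyp: "hyponormal J D A"
  shows
    "(\<forall>x. x \<in> D \<and> A x \<in> D \<and> norm x = 1 \<longrightarrow>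
        2 * (Re (cinner J (A x) x))\<^sup>2 \<le> Re (cinner J (A (A x)) x) + (norm (A x))\<^sup>2)
     \<and> (\<forall>u0. u0 \<noteq> 0 \<longrightarrow> (\<forall>r s t. 0 \<le> r \<and> r < s \<and> s < t \<longrightarrow>
          norm (T s u0) \<le> norm (T r u0) powr ((t - s) / (t - r)) * norm (T t u0) powr ((s - r) / (t - r))))
     \<and> (\<forall>u0. u0 \<noteq> 0 \<longrightarrow>
          (let h = (\<lambda>t. norm (T t u0)) in
            strict_antimono_on {0..} h \<and> strictly_convex_on {0..} h \<and>
            (\<forall>t>0. h differentiable (at t)) \<and>
            (\<exists>d::ereal. d \<le> 0 \<and> ((\<lambda>t. ereal ((h t - h 0) / t)) \<longlongrightarrow> d) (at_right 0) \<and>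
               (norm u0 = 1 \<longrightarrow> d = (INF t\<in>{0<..}. ereal (deriv h t)) \<and> d \<le> ereal (- m_num J D A)) \<and>
               (u0 \<in> D \<and> norm u0 = 1 \<longrightarrow> d = ereal (- Re (cinner J (A u0) u0)) \<and>
                  C1_on_closed_halfline h \<and> smooth_on {0<..} h))))"
proof -
  interpret H: hsg J T D A using J hol gen acc hyp by unfold_locales
  have pa: "\<forall>x. x \<in> D \<and> A x \<in> D \<and> norm x = 1 \<longrightarrow>
        2 * (Re (cinner J (A x) x))\<^sup>2 \<le> Re (cinner J (A (A x)) x) + (norm (A x))\<^sup>2"
  proof (intro allI impI)
    fix x assume x: "x \<in> D \<and> A x \<in> D \<and> norm x = 1"
    then show "2 * (Re (cinner J (A x) x))\<^sup>2 \<le> Re (cinner J (A (A x)) x) + (norm (A x))\<^sup>2"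
      using part_a_hom[OF J hyp, of x] by simp
  qed
  have pbc: "(\<forall>r s t. 0 \<le> r \<and> r < s \<and> s < t \<longrightarrow>
          norm (T s u0) \<le> norm (T r u0) powr ((t - s) / (t - r)) * norm (T t u0) powr ((s - r) / (t - r)))
     \<and> (let h = (\<lambda>t. norm (T t u0)) in
            strict_antimono_on {0..} h \<and> strictly_convex_on {0..} h \<and>
            (\<forall>t>0. h differentiable (at t)) \<and>
            (\<exists>d::ereal. d \<le> 0 \<and> ((\<lambda>t. ereal ((h t - h 0) / t)) \<longlongrightarrow> d) (at_right 0) \<and>
               (norm u0 = 1 \<longrightarrow> d = (INF t\<in>{0<..}. ereal (deriv h t)) \<and> d \<le> ereal (- m_num J D A)) \<and>
               (u0 \<in> D \<and> norm u0 = 1 \<longrightarrow> d = ereal (- Re (cinner J (A u0) u0)) \<and>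
                  C1_on_closed_halfline h \<and> smooth_on {0<..} h)))"
    if u0: "u0 \<noteq> 0" for u0
  proof -
    interpret O: orb J T D A u0 using J hol gen acc hyp u0 by unfold_locales
    have hh: "(\<lambda>t. norm (T t u0)) = O.hh" by (simp add: fun_eq_iff O.hh_def)
    have b: "\<forall>r s t. 0 \<le> r \<and> r < s \<and> s < t \<longrightarrow>
          norm (T s u0) \<le> norm (T r u0) powr ((t - s) / (t - r)) * norm (T t u0) powr ((s - r) / (t - r))"
      using O.part_b unfolding O.hh_def by blast
    have diff: "\<forall>t>0. O.hh differentiable (at t)"
      using O.hh_deriv real_differentiable_def by blast
    have c: "strict_antimono_on {0..} O.hh \<and> strictly_convex_on {0..} O.hh \<and>
            (\<forall>t>0. O.hh differentiable (at t)) \<and>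
            (\<exists>d::ereal. d \<le> 0 \<and> ((\<lambda>t. ereal ((O.hh t - O.hh 0) / t)) \<longlongrightarrow> d) (at_right 0) \<and>
               (norm u0 = 1 \<longrightarrow> d = (INF t\<in>{0<..}. ereal (deriv O.hh t)) \<and> d \<le> ereal (- m_num J D A)) \<and>
               (u0 \<in> D \<and> norm u0 = 1 \<longrightarrow> d = ereal (- Re (cinner J (A u0) u0)) \<and>
                  C1_on_closed_halfline O.hh \<and> smooth_on {0<..} O.hh))"
      using O.hh_strict_anti O.hh_strictly_convex diff O.dd_le0 O.dd_lim O.dd_INF O.dd_le_m O.dd_D O.C1_D O.smooth_hh
      by auto
    show ?thesis using b c unfolding Let_def hh by blast
  qed
  show ?thesis using pa pbc by blast
qed

end
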